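(* Let $m\in\mathbb N^+$, let $\mathcal N$ be a set of monomials of degree $m$ in $X$ and $Y$, and let $I=\langle X^m,Y^m,\mathcal N\rangle\subseteq R$. Suppose that $I=\mathfrak a\cdot\mathfrak b$ for some $\mathfrak a,\mathfrak b\in\mathcal I(R)\setminus\{R\}$, and put $d=\operatorname{mdeg}(\mathfrak a)$, $e=\operatorname{mdeg}(\mathfrak b)$, $r=\dim_K\mathfrak a_K[d]$, $s=\dim_K\mathfrak b_K[e]$. Then: (i) $m=d+e$ and $I_K[m]=\mathfrak a_K[d]\cdot\mathfrak b_K[e]$; (ii) $d\ge1$ and $e\ge1$; (iii) $r\ge2$ and $\mathfrak a_K[d]$ has a $K$-basis $\{f_1,\dots,f_r\}$ with $X^d=\operatorname{in}(f_1)>\operatorname{in}(f_2)>\dots>\operatorname{in}(f_r)$; likewise $s\ge 2$ and $\mathfrak b_K[e]$ has a $K$-basis $\{g_1,\dots,g_s\}$ with $X^e=\operatorname{in}(g_1)>\dots>\operatorname{in}(g_s)$; (iv) for every $j\in[2,r]$ there is $a_j\in[1,d]$ with $\operatorname{in}(f_j)=X^{d-a_j}Y^{a_j}$, and for every $k\in[2,s]$ there is $b_k\in[1,e]$ with $\operatorname{in}(g_k)=X^{e-b_k}Y^{b_k}$; (v) setting $a_1=b_1=0$, for every $j\in[1,r]$ and $k\in[1,s]$ we have $X^{m-(a_j+b_k)}Y^{a_j+b_k}\in\{X^m,Y^m\}\cup\mathcal N$.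
   Context: Let $D$ be an integral domain with quotient field $K$, $N\ge 2$, $R=D[X_1,\dots,X_N]$, $S=K[X_1,\dots,X_N]$, and write $X=X_1$, $Y=X_2$. $\mathcal I(R)$ denotes the monoid of nonzero ideals of $R$ under ideal multiplication (identity $R$; its only unit is $R$). Standing assumption: $\mathcal I(R)$ is a BF-monoid (every element is a product of atoms and has finitely many factorization lengths). For $[x,y]$ with integers $x\le y$ we mean $\{z\in\mathbb Z: x\le z\le y\}$. With the standard grading, every $f\in S$ is uniquely $f=\sum_{t\ge0}f_t$ with $f_t$ homogeneous of degree $t$; the min-degree $\operatorname{mdeg}(f)$ of $f\ne0$ is the least $t$ with $f_t\ne0$, and for a nonzero ideal $J$ of $R$, $\operatorname{mdeg}(J)$ is the least min-degree of a nonzero element of $J$. For $J\in\mathcal I(R)$ and $i\in\mathbb N$, $J[i]=\{f_i: f\in J\}$ and $J_K[i]$ is the $K$-linear span of $J[i]$ in $S$; the product $V\cdot W$ of two such spaces is the $K$-span of all products. $\operatorname{in}(f)$ is the largest monomial occurring in $f$ with nonzero coefficient for the lexicographic order with $X_1>X_2>\dots>X_N$. *)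

theory Defs
  imports "HOL-Library.Poly_Mapping"
begin

text \<open>Multivariate polynomials: a monomial in the variables X_1, X_2, ... is an
exponent vector nat =>0 nat (variable X_(i+1) has index i); a polynomial with
coefficients in the field 'k is a finitely supported map from monomials to 'k.
The domain D is a subring of the field 'k whose quotient field is 'k.\<close>

type_synonym 'k mpoly = "(nat \<Rightarrow>\<^sub>0 nat) \<Rightarrow>\<^sub>0 'k"

definition is_subring :: "'k::field set \<Rightarrow> bool" where
  "is_subring D \<longleftrightarrow> 0 \<in> D \<and> 1 \<in> D \<and> (\<forall>a\<in>D. \<forall>b\<in>D. a + b \<in> D \<and> a - b \<in> D \<and> a * b \<in> D)"

definition has_quotient_field :: "'k::field set \<Rightarrow> bool" where
  "has_quotient_field D \<longleftrightarrow> is_subring D \<and> (\<forall>x. \<exists>a\<in>D. \<exists>b\<in>D. b \<noteq> 0 \<and> x = a / b)"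

definition PolyS :: "nat \<Rightarrow> 'k::field mpoly set" where
  "PolyS N = {p :: 'k mpoly. \<forall>\<mu>\<in>Poly_Mapping.keys p. \<forall>v\<in>Poly_Mapping.keys \<mu>. v < N}"

definition PolyR :: "'k::field set \<Rightarrow> nat \<Rightarrow> 'k mpoly set" where
  "PolyR D N = {p \<in> PolyS N. \<forall>\<mu>. Poly_Mapping.lookup p \<mu> \<in> D}"

definition is_ideal :: "'k::field set \<Rightarrow> nat \<Rightarrow> 'k mpoly set \<Rightarrow> bool" where
  "is_ideal D N J \<longleftrightarrow> J \<subseteq> PolyR D N \<and> 0 \<in> J \<and> (\<forall>f\<in>J. \<forall>g\<in>J. f + g \<in> J)
     \<and> (\<forall>r\<in>PolyR D N. \<forall>f\<in>J. r * f \<in> J)"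

definition nz_ideals :: "'k::field set \<Rightarrow> nat \<Rightarrow> 'k mpoly set set" where
  "nz_ideals D N = {J. is_ideal D N J \<and> J \<noteq> {0}}"

definition ideal_gen :: "'k::field set \<Rightarrow> nat \<Rightarrow> 'k mpoly set \<Rightarrow> 'k mpoly set" where
  "ideal_gen D N G = \<Inter>{J. is_ideal D N J \<and> G \<subseteq> J}"

definition ideal_mult :: "'k::field set \<Rightarrow> nat \<Rightarrow> 'k mpoly set \<Rightarrow> 'k mpoly set \<Rightarrow> 'k mpoly set" where
  "ideal_mult D N A B = ideal_gen D N {a * b |a b. a \<in> A \<and> b \<in> B}"

definition ideal_prod_list :: "'k::field set \<Rightarrow> nat \<Rightarrow> 'k mpoly set list \<Rightarrow> 'k mpoly set" where
  "ideal_prod_list D N Js = foldr (ideal_mult D N) Js (PolyR D N)"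

definition ideal_atom :: "'k::field set \<Rightarrow> nat \<Rightarrow> 'k mpoly set \<Rightarrow> bool" where
  "ideal_atom D N J \<longleftrightarrow> J \<in> nz_ideals D N \<and> J \<noteq> PolyR D N \<and>
     (\<forall>A\<in>nz_ideals D N. \<forall>B\<in>nz_ideals D N. J = ideal_mult D N A B \<longrightarrow> A = PolyR D N \<or> B = PolyR D N)"

definition ideals_BF :: "'k::field set \<Rightarrow> nat \<Rightarrow> bool" where
  "ideals_BF D N \<longleftrightarrow> (\<forall>J\<in>nz_ideals D N.
     (\<exists>As. (\<forall>A\<in>set As. ideal_atom D N A) \<and> J = ideal_prod_list D N As) \<and>
     finite {length As |As. (\<forall>A\<in>set As. ideal_atom D N A) \<and> J = ideal_prod_list D N As})"

definition tdeg :: "(nat \<Rightarrow>\<^sub>0 nat) \<Rightarrow> nat" where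
  "tdeg \<mu> = (\<Sum>v\<in>Poly_Mapping.keys \<mu>. Poly_Mapping.lookup \<mu> v)"

definition hcomp :: "nat \<Rightarrow> 'k::field mpoly \<Rightarrow> 'k mpoly" where
  "hcomp t f = (\<Sum>\<mu>\<in>Poly_Mapping.keys f. if tdeg \<mu> = t then Poly_Mapping.single \<mu> (Poly_Mapping.lookup f \<mu>) else 0)"

definition mdeg :: "'k::field mpoly \<Rightarrow> nat" where
  "mdeg f = (LEAST t. hcomp t f \<noteq> 0)"

definition mdeg_ideal :: "'k::field mpoly set \<Rightarrow> nat" where
  "mdeg_ideal J = (LEAST t. \<exists>f\<in>J. f \<noteq> 0 \<and> mdeg f = t)"

definition comp_set :: "'k::field mpoly set \<Rightarrow> nat \<Rightarrow> 'k mpoly set" where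
  "comp_set J i = hcomp i ` J"

definition smul :: "'k::field \<Rightarrow> 'k mpoly \<Rightarrow> 'k mpoly" where
  "smul c f = Poly_Mapping.map (\<lambda>x. c * x) f"

definition spanK :: "'k::field mpoly set \<Rightarrow> 'k mpoly set" where
  "spanK V = {p. \<exists>F c. finite F \<and> F \<subseteq> V \<and> p = (\<Sum>f\<in>F. smul (c f) f)}"

definition compK :: "'k::field mpoly set \<Rightarrow> nat \<Rightarrow> 'k mpoly set" where
  "compK J i = spanK (comp_set J i)"

definition spprod :: "'k::field mpoly set \<Rightarrow> 'k mpoly set \<Rightarrow> 'k mpoly set" where
  "spprod V W = spanK {v * w |v w. v \<in> V \<and> w \<in> W}"

definition lin_indepK :: "'k::field mpoly list \<Rightarrow> bool" where
  "lin_indepK fs \<longleftrightarrow> (\<forall>c. (\<Sum>i<length fs. smul (c i) (fs ! i)) = 0 \<longrightarrow> (\<forall>i<length fs. c i = 0))"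

definition is_basisK :: "'k::field mpoly set \<Rightarrow> 'k mpoly list \<Rightarrow> bool" where
  "is_basisK V fs \<longleftrightarrow> set fs \<subseteq> V \<and> lin_indepK fs \<and> spanK (set fs) = V"

definition dimK :: "'k::field mpoly set \<Rightarrow> nat" where
  "dimK V = (THE n. \<exists>fs. is_basisK V fs \<and> length fs = n)"

definition lex_less :: "(nat \<Rightarrow>\<^sub>0 nat) \<Rightarrow> (nat \<Rightarrow>\<^sub>0 nat) \<Rightarrow> bool" where
  "lex_less \<mu> \<nu> \<longleftrightarrow> (\<exists>i. (\<forall>j<i. Poly_Mapping.lookup \<mu> j = Poly_Mapping.lookup \<nu> j) \<and> Poly_Mapping.lookup \<mu> i < Poly_Mapping.lookup \<nu> i)"

definition init_mon :: "'k::field mpoly \<Rightarrow> (nat \<Rightarrow>\<^sub>0 nat)" where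
  "init_mon f = (THE \<mu>. \<mu> \<in> Poly_Mapping.keys f \<and> (\<forall>\<nu>\<in>Poly_Mapping.keys f. \<nu> \<noteq> \<mu> \<longrightarrow> lex_less \<nu> \<mu>))"

text \<open>The monomial X^a Y^b (X = X_1, Y = X_2) and the polynomial it denotes.\<close>
definition monXY :: "nat \<Rightarrow> nat \<Rightarrow> (nat \<Rightarrow>\<^sub>0 nat)" where
  "monXY a b = Poly_Mapping.single 0 a + Poly_Mapping.single 1 b"

definition mpoly_of_mon :: "(nat \<Rightarrow>\<^sub>0 nat) \<Rightarrow> 'k::field mpoly" where
  "mpoly_of_mon \<mu> = Poly_Mapping.single \<mu> 1"

end

theory Submission
  imports Defs "HOL.Vector_Spaces"
begin

lemma smul_conv: "smul c f = Poly_Mapping.single 0 c * f"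
  unfolding smul_def by (metis mult_map_scale_conv_mult)

lemma lookup_smul[simp]: "Poly_Mapping.lookup (smul c f) m = c * Poly_Mapping.lookup f m"
  unfolding smul_def by (simp add: Poly_Mapping.map.rep_eq when_def)

interpretation K: vector_space "smul :: 'k::field \<Rightarrow> 'k mpoly \<Rightarrow> 'k mpoly"
  by unfold_locales (simp_all add: smul_conv algebra_simps single_add mult_single flip: mult.assoc)

lemma spanK_eq: "spanK V = K.span V"
  unfolding spanK_def K.span_explicit by blast

lemma lex_less_iff: "lex_less m n \<longleftrightarrow> m < n"
  unfolding lex_less_def less_poly_mapping.rep_eq less_fun_def by blast

lemma poly_decomp: "f = (\<Sum>mu\<in>Poly_Mapping.keys f. Poly_Mapping.single mu (Poly_Mapping.lookup f mu))"
  by (rule poly_mapping_eqI) (simp add: lookup_sum lookup_single when_def in_keys_iff sum.delta' )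

lemma subring_sum: assumes "is_subring D" "finite S" "\<And>x. x \<in> S \<Longrightarrow> g x \<in> D" shows "sum g S \<in> D"
  using assms(2,3) by (induction S rule: finite_induct) (use assms(1) in \<open>auto simp: is_subring_def\<close>)

lemma keys_sum_sub: "Poly_Mapping.keys (sum g S) \<subseteq> (\<Union>i\<in>S. Poly_Mapping.keys (g i))"
proof (induction S rule: infinite_finite_induct)
  case (insert x F)
  then show ?case using keys_add[of "g x" "sum g F"] by auto
qed auto

lemma mult_decomp: "f * g = (\<Sum>mu\<in>Poly_Mapping.keys f. \<Sum>nu\<in>Poly_Mapping.keys g.
    Poly_Mapping.single (mu + nu) (Poly_Mapping.lookup f mu * Poly_Mapping.lookup g nu))"
proof -
  have "f * g = (\<Sum>mu\<in>Poly_Mapping.keys f. Poly_Mapping.single mu (Poly_Mapping.lookup f mu)) *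
      (\<Sum>nu\<in>Poly_Mapping.keys g. Poly_Mapping.single nu (Poly_Mapping.lookup g nu))"
    using poly_decomp[of f] poly_decomp[of g] by simp
  also have "\<dots> = (\<Sum>mu\<in>Poly_Mapping.keys f. \<Sum>nu\<in>Poly_Mapping.keys g.
    Poly_Mapping.single (mu + nu) (Poly_Mapping.lookup f mu * Poly_Mapping.lookup g nu))" 
    by (simp add: sum_distrib_left sum_distrib_right mult_single) (rule sum.swap)
  finally show ?thesis .
qed

definition vars_ok :: "nat \<Rightarrow> (nat \<Rightarrow>\<^sub>0 nat) \<Rightarrow> bool" where
  "vars_ok N mu \<longleftrightarrow> (\<forall>v\<in>Poly_Mapping.keys mu. v < N)"

lemma vars_ok_add: "vars_ok N a \<Longrightarrow> vars_ok N b \<Longrightarrow> vars_ok N (a + b)"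
  unfolding vars_ok_def using keys_add[of a b] by blast

lemma PolyR_iff: "f \<in> PolyR D N \<longleftrightarrow> (\<forall>mu\<in>Poly_Mapping.keys f. vars_ok N mu) \<and> (\<forall>mu. Poly_Mapping.lookup f mu \<in> D)"
  unfolding PolyR_def PolyS_def vars_ok_def by auto

lemma PolyR_add: assumes D: "is_subring D" and "f \<in> PolyR D N" "g \<in> PolyR D N"
  shows "f + g \<in> PolyR D N"
  using assms keys_add[of f g] unfolding PolyR_iff is_subring_def by (auto simp: lookup_add)

lemma PolyR_mult: assumes D: "is_subring D" and f: "f \<in> PolyR D N" and g: "g \<in> PolyR D N"
  shows "f * g \<in> PolyR D N"
  unfolding PolyR_iff
proof
  show "\<forall>mu\<in>Poly_Mapping.keys (f * g). vars_ok N mu"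
    using keys_mult[of f g] f g vars_ok_add unfolding PolyR_iff by blast
  show "\<forall>mu. Poly_Mapping.lookup (f * g) mu \<in> D"
  proof
    fix mu
    have "Poly_Mapping.lookup (f * g) mu = (\<Sum>a\<in>Poly_Mapping.keys f. \<Sum>b\<in>Poly_Mapping.keys g.
      Poly_Mapping.lookup (Poly_Mapping.single (a + b) (Poly_Mapping.lookup f a * Poly_Mapping.lookup g b)) mu)"
      by (subst mult_decomp) (simp add: lookup_sum)
    also have "\<dots> \<in> D"
      using f g D unfolding PolyR_iff
      by (intro subring_sum[OF D] ) (auto simp: lookup_single when_def is_subring_def)
    finally show "Poly_Mapping.lookup (f * g) mu \<in> D" .
  qed
qed

lemma PolyR_zero: "is_subring D \<Longrightarrow> 0 \<in> PolyR D N"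
  unfolding PolyR_iff is_subring_def by auto

lemma PolyR_one: "is_subring D \<Longrightarrow> 1 \<in> PolyR D N"
  unfolding PolyR_iff is_subring_def vars_ok_def
  by (auto simp flip: single_one simp: lookup_single when_def)

lemma PolyR_single: "is_subring D \<Longrightarrow> c \<in> D \<Longrightarrow> vars_ok N mu \<Longrightarrow> Poly_Mapping.single mu c \<in> PolyR D N"
  unfolding PolyR_iff is_subring_def by (auto simp: lookup_single when_def)

lemma ideal_PolyR: "is_subring D \<Longrightarrow> is_ideal D N (PolyR D N)"
  unfolding is_ideal_def using PolyR_zero PolyR_add PolyR_mult by blast

lemma ideal_sum: assumes "is_ideal D N J" "finite S" "\<And>x. x \<in> S \<Longrightarrow> g x \<in> J" shows "sum g S \<in> J"
  using assms(2,3) by (induction S rule: finite_induct) (use assms(1) in \<open>auto simp: is_ideal_def\<close>)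

lemma ideal_multR: "is_ideal D N J \<Longrightarrow> r \<in> PolyR D N \<Longrightarrow> f \<in> J \<Longrightarrow> r * f \<in> J"
  unfolding is_ideal_def by blast

lemma ideal_sub: "is_ideal D N J \<Longrightarrow> J \<subseteq> PolyR D N"
  unfolding is_ideal_def by blast

lemma gen_least: "is_ideal D N J \<Longrightarrow> G \<subseteq> J \<Longrightarrow> ideal_gen D N G \<subseteq> J"
  unfolding ideal_gen_def by blast

lemma gen_sup: "G \<subseteq> ideal_gen D N G"
  unfolding ideal_gen_def by blast

lemma gen_ideal: assumes D: "is_subring D" and G: "G \<subseteq> PolyR D N"
  shows "is_ideal D N (ideal_gen D N G)"
proof -
  let ?F = "{J. is_ideal D N J \<and> G \<subseteq> J}"
  have R: "PolyR D N \<in> ?F" using ideal_PolyR[OF D] G by blast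
  have "\<Inter> ?F \<subseteq> PolyR D N" using R by blast
  then show ?thesis unfolding ideal_gen_def is_ideal_def
    by (auto simp: is_ideal_def)
qed

inductive_set addcl :: "'a::comm_monoid_add set \<Rightarrow> 'a set" for S where
  addcl_zero: "0 \<in> addcl S"
| addcl_base: "x \<in> S \<Longrightarrow> x \<in> addcl S"
| addcl_add: "x \<in> addcl S \<Longrightarrow> y \<in> addcl S \<Longrightarrow> x + y \<in> addcl S"

lemma mult_gen_sub: "is_subring D \<Longrightarrow> A \<subseteq> PolyR D N \<Longrightarrow> B \<subseteq> PolyR D N \<Longrightarrow>
   {a * b |a b. a \<in> A \<and> b \<in> B} \<subseteq> PolyR D N"
  using PolyR_mult by blast

lemma ideal_mult_ideal: "is_subring D \<Longrightarrow> A \<subseteq> PolyR D N \<Longrightarrow> B \<subseteq> PolyR D N \<Longrightarrow>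
   is_ideal D N (ideal_mult D N A B)"
  unfolding ideal_mult_def by (rule gen_ideal, assumption, rule mult_gen_sub)

lemma ideal_mult_gen: "a \<in> A \<Longrightarrow> b \<in> B \<Longrightarrow> a * b \<in> ideal_mult D N A B"
  unfolding ideal_mult_def using gen_sup[of "{a * b |a b. a \<in> A \<and> b \<in> B}" D N] by blast

lemma ideal_mult_least: "is_ideal D N J \<Longrightarrow> (\<And>a b. a \<in> A \<Longrightarrow> b \<in> B \<Longrightarrow> a * b \<in> J) \<Longrightarrow>
   ideal_mult D N A B \<subseteq> J"
  unfolding ideal_mult_def by (rule gen_least) blast+

lemma ideal_mult_comm: "ideal_mult D N A B = ideal_mult D N B A"
proof -
  have "{a * b |a b. a \<in> A \<and> b \<in> B} = {a * b |a b. a \<in> B \<and> b \<in> A}"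
    by (metis (no_types, opaque_lifting) mult.commute)
  then show ?thesis unfolding ideal_mult_def by simp
qed

lemma ideal_mult_char:
  assumes D: "is_subring D" and A: "is_ideal D N A" and B: "is_ideal D N B"
  shows "ideal_mult D N A B = addcl {a * b |a b. a \<in> A \<and> b \<in> B}"
proof
  let ?S = "addcl {a * b |a b. a \<in> A \<and> b \<in> B}"
  have AR: "A \<subseteq> PolyR D N" and BR: "B \<subseteq> PolyR D N" using A B ideal_sub by auto
  have sub: "x \<in> PolyR D N" if "x \<in> ?S" for x
    using that
  proof induction
    case addcl_zero then show ?case using PolyR_zero[OF D] .
  next
    case (addcl_base x) then show ?case using AR BR PolyR_mult[OF D] by blast
  next
    case (addcl_add x y) then show ?case using PolyR_add[OF D] by blast
  qed
  have mul: "r * x \<in> ?S" if "x \<in> ?S" "r \<in> PolyR D N" for x r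
    using that
  proof induction
    case addcl_zero then show ?case by (simp add: addcl.addcl_zero)
  next
    case (addcl_base x)
    then obtain a b where "x = a * b" "a \<in> A" "b \<in> B" by blast
    then have e: "r * x = (r * a) * b" and ra: "r * a \<in> A" using A ideal_multR addcl_base(2) by (auto simp: mult.assoc)
    have "(r * a) * b \<in> {a * b |a b. a \<in> A \<and> b \<in> B}" using ra \<open>b \<in> B\<close> by blast
    then show ?case unfolding e by (rule addcl.addcl_base)
  next
    case (addcl_add x y) then show ?case by (simp add: distrib_left addcl.addcl_add)
  qed
  have "is_ideal D N ?S" unfolding is_ideal_def
    using sub mul addcl.addcl_zero addcl.addcl_add by blast
  then show "ideal_mult D N A B \<subseteq> ?S"
    by (rule ideal_mult_least) (blast intro: addcl.addcl_base)
  show "?S \<subseteq> ideal_mult D N A B"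
  proof
    fix x assume "x \<in> ?S"
    then show "x \<in> ideal_mult D N A B"
    proof induction
      case addcl_zero then show ?case using ideal_mult_ideal[OF D AR BR] by (simp add: is_ideal_def)
    next
      case (addcl_base x) then show ?case using ideal_mult_gen by blast
    next
      case (addcl_add x y) then show ?case using ideal_mult_ideal[OF D AR BR] by (simp add: is_ideal_def)
    qed
  qed
qed

lemma ideal_mult_assoc1:
  assumes D: "is_subring D" and A: "is_ideal D N A" and B: "is_ideal D N B" and C: "is_ideal D N C"
  shows "ideal_mult D N A (ideal_mult D N B C) \<subseteq> ideal_mult D N (ideal_mult D N A B) C"
proof -
  have AR: "A \<subseteq> PolyR D N" and BR: "B \<subseteq> PolyR D N" and CR: "C \<subseteq> PolyR D N"
    using A B C ideal_sub by auto
  have AB: "is_ideal D N (ideal_mult D N A B)" using ideal_mult_ideal[OF D AR BR] .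
  have ABC: "is_ideal D N (ideal_mult D N (ideal_mult D N A B) C)"
    using ideal_mult_ideal[OF D ideal_sub[OF AB] CR] .
  show ?thesis
  proof (rule ideal_mult_least[OF ABC])
    fix a y assume a: "a \<in> A" and y: "y \<in> ideal_mult D N B C"
    from y have "y \<in> addcl {b * c |b c. b \<in> B \<and> c \<in> C}" using ideal_mult_char[OF D B C] by simp
    then show "a * y \<in> ideal_mult D N (ideal_mult D N A B) C"
    proof induction
      case addcl_zero then show ?case using ABC by (simp add: is_ideal_def)
    next
      case (addcl_base x)
      then obtain b c where "x = b * c" "b \<in> B" "c \<in> C" by blast
      then show ?case using a ideal_mult_gen[of "a * b" "ideal_mult D N A B" c C] ideal_mult_gen[of a A b B]
        by (simp add: mult.assoc)
    next
      case (addcl_add x y) then show ?case using ABC by (simp add: is_ideal_def distrib_left)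
    qed
  qed
qed

lemma ideal_mult_assoc:
  assumes D: "is_subring D" and A: "is_ideal D N A" and B: "is_ideal D N B" and C: "is_ideal D N C"
  shows "ideal_mult D N A (ideal_mult D N B C) = ideal_mult D N (ideal_mult D N A B) C"
proof
  show "ideal_mult D N A (ideal_mult D N B C) \<subseteq> ideal_mult D N (ideal_mult D N A B) C"
    using ideal_mult_assoc1[OF D A B C] .
  have "ideal_mult D N (ideal_mult D N A B) C = ideal_mult D N C (ideal_mult D N B A)"
    by (simp add: ideal_mult_comm)
  also have "\<dots> \<subseteq> ideal_mult D N (ideal_mult D N C B) A"
    using ideal_mult_assoc1[OF D C B A] .
  also have "\<dots> = ideal_mult D N A (ideal_mult D N B C)"
    by (simp add: ideal_mult_comm)
  finally show "ideal_mult D N (ideal_mult D N A B) C \<subseteq> ideal_mult D N A (ideal_mult D N B C)" .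
qed

lemma ideal_mult_R:
  assumes D: "is_subring D" and J: "is_ideal D N J"
  shows "ideal_mult D N (PolyR D N) J = J"
proof
  show "ideal_mult D N (PolyR D N) J \<subseteq> J"
    by (rule ideal_mult_least[OF J]) (use J ideal_multR in blast)
  show "J \<subseteq> ideal_mult D N (PolyR D N) J"
    using ideal_mult_gen[of 1 "PolyR D N" _ J D N] PolyR_one[OF D] by auto
qed

lemma prod_list_Cons: "ideal_prod_list D N (x # xs) = ideal_mult D N x (ideal_prod_list D N xs)"
  unfolding ideal_prod_list_def by simp

lemma prod_list_Nil: "ideal_prod_list D N [] = PolyR D N"
  unfolding ideal_prod_list_def by simp

lemma prod_list_ideal:
  assumes D: "is_subring D" and "\<forall>x\<in>set xs. is_ideal D N x"
  shows "is_ideal D N (ideal_prod_list D N xs)"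
  using assms(2)
proof (induction xs)
  case Nil then show ?case using ideal_PolyR[OF D] by (simp add: prod_list_Nil)
next
  case (Cons x xs) then show ?case
    using ideal_mult_ideal[OF D ideal_sub ideal_sub, of N x "ideal_prod_list D N xs"] by (simp add: prod_list_Cons)
qed

lemma prod_list_append:
  assumes D: "is_subring D" and "\<forall>x\<in>set xs. is_ideal D N x" and "\<forall>x\<in>set ys. is_ideal D N x"
  shows "ideal_prod_list D N (xs @ ys) = ideal_mult D N (ideal_prod_list D N xs) (ideal_prod_list D N ys)"
  using assms(2)
proof (induction xs)
  case Nil then show ?case
    using ideal_mult_R[OF D prod_list_ideal[OF D assms(3)]] by (simp add: prod_list_Nil)
next
  case (Cons x xs)
  then show ?case
    using ideal_mult_assoc[OF D _ prod_list_ideal[OF D] prod_list_ideal[OF D assms(3)], of x xs]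
    by (simp add: prod_list_Cons)
qed

lemma tdeg_superset: "finite S \<Longrightarrow> Poly_Mapping.keys mu \<subseteq> S \<Longrightarrow> tdeg mu = (\<Sum>v\<in>S. Poly_Mapping.lookup mu v)"
  unfolding tdeg_def by (rule sum.mono_neutral_left) (auto simp: in_keys_iff)

lemma tdeg_add: "tdeg (a + b) = tdeg a + tdeg b"
proof -
  let ?S = "Poly_Mapping.keys a \<union> Poly_Mapping.keys b"
  have "tdeg (a + b) = (\<Sum>v\<in>?S. Poly_Mapping.lookup (a + b) v)"
    using keys_add[of a b] by (intro tdeg_superset) auto
  also have "\<dots> = (\<Sum>v\<in>?S. Poly_Mapping.lookup a v) + (\<Sum>v\<in>?S. Poly_Mapping.lookup b v)"
    by (simp add: lookup_add sum.distrib)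
  also have "\<dots> = tdeg a + tdeg b"
    using tdeg_superset[of ?S a] tdeg_superset[of ?S b] by auto
  finally show ?thesis .
qed

lemma tdeg_zero_iff: "tdeg mu = 0 \<longleftrightarrow> mu = 0"
proof
  assume "tdeg mu = 0"
  then have "\<forall>v\<in>Poly_Mapping.keys mu. Poly_Mapping.lookup mu v = 0"
    unfolding tdeg_def by simp
  then show "mu = 0" by (metis in_keys_iff keys_eq_empty all_not_in_conv)
qed (simp add: tdeg_def)

lemma lookup_monXY: "Poly_Mapping.lookup (monXY a b) i = (if i = 0 then a else if i = 1 then b else 0)"
  unfolding monXY_def by (simp add: lookup_add lookup_single when_def)

lemma keys_monXY: "Poly_Mapping.keys (monXY a b) \<subseteq> {0, 1}"
proof
  fix x assume "x \<in> Poly_Mapping.keys (monXY a b)"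
  then have "Poly_Mapping.lookup (monXY a b) x \<noteq> 0" by (simp add: in_keys_iff)
  then show "x \<in> {0, 1}" by (simp add: lookup_monXY split: if_splits)
qed

lemma tdeg_monXY: "tdeg (monXY a b) = a + b"
  by (subst tdeg_superset[of "{0,1}"]) (use keys_monXY in \<open>auto simp: lookup_monXY\<close>)

lemma monXY_add: "monXY a b + monXY c d = monXY (a + c) (b + d)"
  unfolding monXY_def by (simp add: single_add algebra_simps)


definition projP :: "((nat \<Rightarrow>\<^sub>0 nat) \<Rightarrow> bool) \<Rightarrow> 'k::field mpoly \<Rightarrow> 'k mpoly" where
  "projP P f = Abs_poly_mapping (\<lambda>mu. if P mu then Poly_Mapping.lookup f mu else 0)"

lemma lookup_projP: "Poly_Mapping.lookup (projP P f) mu = (if P mu then Poly_Mapping.lookup f mu else 0)"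
proof -
  have "{mu. (if P mu then Poly_Mapping.lookup f mu else 0) \<noteq> 0} \<subseteq> Poly_Mapping.keys f"
    by (auto simp: in_keys_iff split: if_splits)
  then have "finite {mu. (if P mu then Poly_Mapping.lookup f mu else 0) \<noteq> 0}"
    by (rule finite_subset) simp
  then show ?thesis unfolding projP_def by simp
qed

lemma keys_projP: "Poly_Mapping.keys (projP P f) = {mu\<in>Poly_Mapping.keys f. P mu}"
  by (auto simp: in_keys_iff lookup_projP split: if_splits)

lemma projP_add: "projP P (f + g) = projP P f + projP P g"
  by (rule poly_mapping_eqI) (simp add: lookup_projP lookup_add)

lemma projP_id: "(\<forall>mu\<in>Poly_Mapping.keys f. P mu) \<Longrightarrow> projP P f = f"
  by (rule poly_mapping_eqI) (auto simp: lookup_projP in_keys_iff)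

lemma projP_zero: "(\<forall>mu\<in>Poly_Mapping.keys f. \<not> P mu) \<Longrightarrow> projP P f = 0"
  by (rule poly_mapping_eqI) (auto simp: lookup_projP in_keys_iff)

lemma projP_split: "f = projP P f + projP (\<lambda>mu. \<not> P mu) f"
  by (rule poly_mapping_eqI) (simp add: lookup_projP lookup_add)

lemma projP_smul: "projP P (smul c f) = smul c (projP P f)"
  by (rule poly_mapping_eqI) (simp add: lookup_projP)

lemma hcomp_eq: "hcomp t f = projP (\<lambda>mu. tdeg mu = t) f"
proof (rule poly_mapping_eqI)
  fix mu
  have "Poly_Mapping.lookup (hcomp t f) mu = (\<Sum>nu\<in>Poly_Mapping.keys f.
     if tdeg nu = t then (if nu = mu then Poly_Mapping.lookup f nu else 0) else 0)"
    unfolding hcomp_def lookup_sum by (intro sum.cong) (auto simp: lookup_single when_def)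
  also have "\<dots> = (\<Sum>nu\<in>Poly_Mapping.keys f. if nu = mu then (if tdeg mu = t then Poly_Mapping.lookup f mu else 0) else 0)"
    by (intro sum.cong) auto
  also have "\<dots> = Poly_Mapping.lookup (projP (\<lambda>mu. tdeg mu = t) f) mu"
    by (simp add: lookup_projP in_keys_iff)
  finally show "Poly_Mapping.lookup (hcomp t f) mu = Poly_Mapping.lookup (projP (\<lambda>mu. tdeg mu = t) f) mu" .
qed

lemma lookup_hcomp: "Poly_Mapping.lookup (hcomp t f) mu = (if tdeg mu = t then Poly_Mapping.lookup f mu else 0)"
  by (simp add: hcomp_eq lookup_projP)

locale weight =
  fixes wt :: "(nat \<Rightarrow>\<^sub>0 nat) \<Rightarrow> nat"
  assumes wt_add: "wt (a + b) = wt a + wt b"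
begin

lemma prod_low:
  fixes f g :: "'k::field mpoly"
  assumes "\<forall>mu\<in>Poly_Mapping.keys f. x \<le> wt mu" "\<forall>mu\<in>Poly_Mapping.keys g. y \<le> wt mu"
  shows "\<forall>mu\<in>Poly_Mapping.keys (f * g). x + y \<le> wt mu"
  using keys_mult[of f g] assms by (force simp: wt_add intro: add_mono)

lemma prod_low_eq:
  fixes f g :: "'k::field mpoly"
  assumes f: "\<forall>mu\<in>Poly_Mapping.keys f. x \<le> wt mu" and g: "\<forall>mu\<in>Poly_Mapping.keys g. y \<le> wt mu"
  shows "projP (\<lambda>mu. wt mu = x + y) (f * g) = projP (\<lambda>mu. wt mu = x) f * projP (\<lambda>mu. wt mu = y) g"
proof -
  define f1 where "f1 = projP (\<lambda>mu. wt mu = x) f"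
  define f2 where "f2 = projP (\<lambda>mu. \<not> wt mu = x) f"
  define g1 where "g1 = projP (\<lambda>mu. wt mu = y) g"
  define g2 where "g2 = projP (\<lambda>mu. \<not> wt mu = y) g"
  have fs: "f = f1 + f2" unfolding f1_def f2_def by (rule projP_split)
  have gs: "g = g1 + g2" unfolding g1_def g2_def by (rule projP_split)
  have kf1: "\<forall>mu\<in>Poly_Mapping.keys f1. x \<le> wt mu \<and> wt mu \<le> x" unfolding f1_def keys_projP by auto
  have kf2: "\<forall>mu\<in>Poly_Mapping.keys f2. Suc x \<le> wt mu" using f unfolding f2_def keys_projP by force
  have kg1: "\<forall>mu\<in>Poly_Mapping.keys g1. y \<le> wt mu \<and> wt mu \<le> y" unfolding g1_def keys_projP by auto
  have kg2: "\<forall>mu\<in>Poly_Mapping.keys g2. Suc y \<le> wt mu" using g unfolding g2_def keys_projP by force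
  have k11: "\<forall>mu\<in>Poly_Mapping.keys (f1 * g1). wt mu = x + y"
    using keys_mult[of f1 g1] kf1 kg1 by (force simp: wt_add)
  have k12: "\<forall>mu\<in>Poly_Mapping.keys (f1 * g2). Suc (x + y) \<le> wt mu"
    using prod_low[of f1 x g2 "Suc y"] kf1 kg2 by auto
  have k21: "\<forall>mu\<in>Poly_Mapping.keys (f2 * g1). Suc (x + y) \<le> wt mu"
    using prod_low[of f2 "Suc x" g1 y] kf2 kg1 by auto
  have k22: "\<forall>mu\<in>Poly_Mapping.keys (f2 * g2). Suc (x + y) \<le> wt mu"
    using prod_low[of f2 "Suc x" g2 "Suc y"] kf2 kg2 by auto
  have "f * g = f1 * g1 + f1 * g2 + f2 * g1 + f2 * g2"
    unfolding fs gs by (simp add: algebra_simps)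
  moreover have "projP (\<lambda>mu. wt mu = x + y) (f1 * g2) = 0" by (rule projP_zero) (use k12 in force)
  moreover have "projP (\<lambda>mu. wt mu = x + y) (f2 * g1) = 0" by (rule projP_zero) (use k21 in force)
  moreover have "projP (\<lambda>mu. wt mu = x + y) (f2 * g2) = 0" by (rule projP_zero) (use k22 in force)
  moreover have "projP (\<lambda>mu. wt mu = x + y) (f1 * g1) = f1 * g1" by (rule projP_id) (use k11 in force)
  ultimately have "projP (\<lambda>mu. wt mu = x + y) (f * g) = f1 * g1"
    by (simp add: projP_add)
  then show ?thesis unfolding f1_def g1_def .
qed

end

lemma keys_smul_sub: "Poly_Mapping.keys (smul c f) \<subseteq> Poly_Mapping.keys f"
  by (auto simp: in_keys_iff)

lemma subspace_keys: "K.subspace {x :: 'k::field mpoly. \<forall>mu\<in>Poly_Mapping.keys x. Q mu}"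
  unfolding K.subspace_def using keys_add keys_smul_sub by fastforce

lemma span_keys: assumes "\<forall>v\<in>S. \<forall>mu\<in>Poly_Mapping.keys v. Q mu" "x \<in> K.span S"
  shows "\<forall>mu\<in>Poly_Mapping.keys (x :: 'k::field mpoly). Q mu"
proof -
  have "K.span S \<subseteq> {x :: 'k::field mpoly. \<forall>mu\<in>Poly_Mapping.keys x. Q mu}"
    by (rule K.span_minimal[OF _ subspace_keys]) (use assms(1) in blast)
  then show ?thesis using assms(2) by blast
qed

lemma init_mon_eq: assumes "f \<noteq> 0" shows "init_mon f = Max (Poly_Mapping.keys f)"
proof -
  have ne: "Poly_Mapping.keys f \<noteq> {}" using assms by simp
  show ?thesis unfolding init_mon_def
  proof (rule the_equality)
    show "Max (Poly_Mapping.keys f) \<in> Poly_Mapping.keys f \<and>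
      (\<forall>nu\<in>Poly_Mapping.keys f. nu \<noteq> Max (Poly_Mapping.keys f) \<longrightarrow> lex_less nu (Max (Poly_Mapping.keys f)))"
      using ne by (auto simp: lex_less_iff order.strict_iff_order)
  next
    fix mu assume "mu \<in> Poly_Mapping.keys f \<and> (\<forall>nu\<in>Poly_Mapping.keys f. nu \<noteq> mu \<longrightarrow> lex_less nu mu)"
    then show "mu = Max (Poly_Mapping.keys f)"
      using ne by (metis Max_ge Max_in finite_keys leD lex_less_iff)
  qed
qed

lemma init_in_keys: "f \<noteq> 0 \<Longrightarrow> init_mon f \<in> Poly_Mapping.keys f"
  by (simp add: init_mon_eq)

lemma keys_le_init: assumes "mu \<in> Poly_Mapping.keys f" shows "mu \<le> init_mon f"
proof -
  have "f \<noteq> 0" using assms by auto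
  then show ?thesis using init_mon_eq[of f] assms by simp
qed

lemma init_unique: "mu \<in> Poly_Mapping.keys f \<Longrightarrow> (\<forall>nu\<in>Poly_Mapping.keys f. nu \<le> mu) \<Longrightarrow> init_mon f = mu"
  by (metis antisym empty_iff init_in_keys keys_le_init keys_zero)

lemma init_mult:
  fixes f g :: "'k::field mpoly"
  assumes f: "f \<noteq> 0" and g: "g \<noteq> 0"
  shows "init_mon (f * g) = init_mon f + init_mon g" and "f * g \<noteq> 0"
proof -
  define a where "a = init_mon f"
  define b where "b = init_mon g"
  define f1 where "f1 = projP (\<lambda>mu. mu = a) f"
  define f2 where "f2 = projP (\<lambda>mu. \<not> mu = a) f"
  define g1 where "g1 = projP (\<lambda>mu. mu = b) g"
  define g2 where "g2 = projP (\<lambda>mu. \<not> mu = b) g"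
  have fs: "f = f1 + f2" unfolding f1_def f2_def by (rule projP_split)
  have gs: "g = g1 + g2" unfolding g1_def g2_def by (rule projP_split)
  have f1e: "f1 = Poly_Mapping.single a (Poly_Mapping.lookup f a)"
    unfolding f1_def by (rule poly_mapping_eqI) (simp add: lookup_projP lookup_single when_def)
  have g1e: "g1 = Poly_Mapping.single b (Poly_Mapping.lookup g b)"
    unfolding g1_def by (rule poly_mapping_eqI) (simp add: lookup_projP lookup_single when_def)
  have fa: "Poly_Mapping.lookup f a \<noteq> 0" using init_in_keys[OF f] unfolding a_def by (simp add: in_keys_iff)
  have gb: "Poly_Mapping.lookup g b \<noteq> 0" using init_in_keys[OF g] unfolding b_def by (simp add: in_keys_iff)
  have kf1: "\<forall>mu\<in>Poly_Mapping.keys f1. mu \<le> a" using f1e by simp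
  have kg1: "\<forall>mu\<in>Poly_Mapping.keys g1. mu \<le> b" using g1e by simp
  have kf2: "\<forall>mu\<in>Poly_Mapping.keys f2. mu < a"
    unfolding f2_def keys_projP a_def using keys_le_init order.strict_iff_order by auto
  have kg2: "\<forall>mu\<in>Poly_Mapping.keys g2. mu < b"
    unfolding g2_def keys_projP b_def using keys_le_init order.strict_iff_order by auto
  have L1: "\<forall>mu\<in>Poly_Mapping.keys (f1 * g2). mu < a + b"
    using keys_mult[of f1 g2] kf1 kg2 by (force intro: add_le_less_mono)
  have L2: "\<forall>mu\<in>Poly_Mapping.keys (f2 * g1). mu < a + b"
    using keys_mult[of f2 g1] kf2 kg1 by (force intro: add_less_le_mono)
  have L3: "\<forall>mu\<in>Poly_Mapping.keys (f2 * g2). mu < a + b"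
    using keys_mult[of f2 g2] kf2 kg2 by (force intro: add_strict_mono)
  have e: "f * g = f1 * g1 + f1 * g2 + f2 * g1 + f2 * g2"
    unfolding fs gs by (simp add: algebra_simps)
  have p11: "f1 * g1 = Poly_Mapping.single (a + b) (Poly_Mapping.lookup f a * Poly_Mapping.lookup g b)"
    unfolding f1e g1e by (simp add: mult_single)
  have "Poly_Mapping.lookup (f * g) (a + b) = Poly_Mapping.lookup f a * Poly_Mapping.lookup g b"
  proof -
    have "Poly_Mapping.lookup (f1 * g2) (a + b) = 0" using L1 by (meson in_keys_iff less_irrefl)
    moreover have "Poly_Mapping.lookup (f2 * g1) (a + b) = 0" using L2 by (meson in_keys_iff less_irrefl)
    moreover have "Poly_Mapping.lookup (f2 * g2) (a + b) = 0" using L3 by (meson in_keys_iff less_irrefl)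
    ultimately show ?thesis unfolding e p11 by (simp add: lookup_add)
  qed
  then have k: "a + b \<in> Poly_Mapping.keys (f * g)" using fa gb by (simp add: in_keys_iff)
  have le: "\<forall>nu\<in>Poly_Mapping.keys (f * g). nu \<le> a + b"
    using keys_mult[of f g] keys_le_init unfolding a_def b_def by (force intro: add_mono)
  show "init_mon (f * g) = init_mon f + init_mon g"
    using init_unique[OF k le] unfolding a_def b_def .
  show "f * g \<noteq> 0" using k by auto
qed

lemma sum_nth_set: "distinct xs \<Longrightarrow> (\<Sum>k<length xs. g (xs ! k)) = (\<Sum>v\<in>set xs. g v)"
  using sum.reindex_bij_betw[OF bij_betw_nth[of xs "{..<length xs}" "set xs"], of g] by simp

lemma lin_indep_distinct:
  fixes fs :: "'k::field mpoly list"
  assumes "lin_indepK fs" shows "distinct fs"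
proof (rule ccontr)
  assume "\<not> distinct fs"
  then obtain i j where ij: "i < length fs" "j < length fs" "i \<noteq> j" "fs ! i = fs ! j"
    by (auto simp: distinct_conv_nth)
  define c where "c = (\<lambda>k. if k = i then (1::'k) else if k = j then -1 else 0)"
  have "(\<Sum>k<length fs. smul (c k) (fs ! k)) = (\<Sum>k\<in>{i, j}. smul (c k) (fs ! k))"
    by (rule sum.mono_neutral_right) (auto simp: c_def ij smul_conv)
  also have "\<dots> = 0" using ij by (simp add: c_def smul_conv single_uminus)
  finally have "\<forall>k<length fs. c k = 0" using assms unfolding lin_indepK_def by blast
  then have "c i = 0" using ij(1) by blast
  then show False by (simp add: c_def)
qed

lemma lin_indep_indep:
  fixes fs :: "'k::field mpoly list"
  assumes li: "lin_indepK fs" shows "K.independent (set fs)"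
proof -
  have dist: "distinct fs" using lin_indep_distinct[OF li] .
  show ?thesis unfolding K.independent_explicit_module
  proof (intro allI impI)
    fix t u v assume t: "finite t" "t \<subseteq> set fs" "(\<Sum>v\<in>t. smul (u v) v) = 0" "v \<in> t"
    define c where "c = (\<lambda>k. if fs ! k \<in> t then u (fs ! k) else 0)"
    have "(\<Sum>k<length fs. smul (c k) (fs ! k)) = (\<Sum>w\<in>set fs. smul (if w \<in> t then u w else 0) w)"
      unfolding c_def using sum_nth_set[OF dist, of "\<lambda>w. smul (if w \<in> t then u w else 0) w"]
      by (simp add: if_distrib)
    also have "\<dots> = (\<Sum>w\<in>t. smul (if w \<in> t then u w else 0) w)"
      by (rule sum.mono_neutral_right) (use t in \<open>auto simp: smul_conv\<close>)
    also have "\<dots> = 0" using t(3) by simp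
    finally have z: "\<forall>k<length fs. c k = 0" using li unfolding lin_indepK_def by blast
    obtain k where "k < length fs" "fs ! k = v" using t by (metis in_set_conv_nth subsetD)
    then show "u v = 0" using z t(4) by (force simp: c_def)
  qed
qed

lemma dimK_basis:
  fixes fs :: "'k::field mpoly list"
  assumes "is_basisK V fs" shows "dimK V = length fs"
proof -
  have L: "length gs = K.dim V" if "is_basisK V gs" for gs :: "'k mpoly list"
  proof -
    have "V = K.span (set gs)" using that unfolding is_basisK_def spanK_eq by simp
    moreover have ind: "K.independent (set gs)" using lin_indep_indep that unfolding is_basisK_def by blast
    ultimately have "K.dim V = card (set gs)"
      using K.dim_span_eq_card_independent[OF ind] by simp
    also have "\<dots> = length gs" using lin_indep_distinct[of gs] that unfolding is_basisK_def by (simp add: distinct_card)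
    finally show ?thesis by simp
  qed
  show ?thesis unfolding dimK_def
    by (rule the_equality) (use assms L in auto)
qed

lemma echelon:
  fixes V :: "'k::field mpoly set"
  assumes sub: "K.subspace V" and fin: "finite Mons" and km: "\<forall>v\<in>V. Poly_Mapping.keys v \<subseteq> Mons"
  shows "\<exists>fs. is_basisK V fs \<and> sorted_wrt (\<lambda>x y. init_mon y < init_mon x) fs
     \<and> init_mon ` set fs = {init_mon v |v. v \<in> V \<and> v \<noteq> 0} \<and> 0 \<notin> set fs"
proof -
  define M where "M = {init_mon v |v. v \<in> V \<and> v \<noteq> 0}"
  have finM: "finite M" 
  proof (rule finite_subset[OF _ fin])
    show "M \<subseteq> Mons" unfolding M_def using km init_in_keys by blast
  qed
  define pick where "pick = (\<lambda>mu. SOME v. v \<in> V \<and> v \<noteq> 0 \<and> init_mon v = mu)"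
  have pick: "pick mu \<in> V \<and> pick mu \<noteq> 0 \<and> init_mon (pick mu) = mu" if "mu \<in> M" for mu
    unfolding pick_def by (rule someI_ex) (use that in \<open>auto simp: M_def\<close>)
  define L where "L = rev (sorted_list_of_set M)"
  have setL: "set L = M" unfolding L_def using finM by simp
  have sL: "sorted_wrt (\<lambda>x y. y < x) L" unfolding L_def sorted_wrt_rev
    using strict_sorted_list_of_set by simp
  define fs where "fs = map pick L"
  have fsV: "set fs \<subseteq> V" unfolding fs_def using pick setL by auto
  have fs0: "0 \<notin> set fs" unfolding fs_def using pick setL by auto
  have initfs: "init_mon (fs ! i) = L ! i" if "i < length fs" for i
    using that pick setL unfolding fs_def by auto
  have sfs: "sorted_wrt (\<lambda>x y. init_mon y < init_mon x) fs"
    unfolding fs_def sorted_wrt_map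
    using sL pick setL by (auto intro: sorted_wrt_mono_rel[of L])
  have imfs: "init_mon ` set fs = M"
    unfolding fs_def using pick setL by (force simp: image_iff)
  have less: "init_mon (fs ! j) < init_mon (fs ! i)" if "i < j" "j < length fs" for i j
    using sfs that by (simp add: sorted_wrt_iff_nth_less)
  have li: "lin_indepK fs" unfolding lin_indepK_def
  proof (intro allI impI)
    fix c i assume sum0: "(\<Sum>i<length fs. smul (c i) (fs ! i)) = 0" and i: "i < length fs"
    show "c i = 0"
    proof (rule ccontr)
      assume ci: "c i \<noteq> 0"
      define i0 where "i0 = (LEAST k. k < length fs \<and> c k \<noteq> 0)"
      have i0: "i0 < length fs" "c i0 \<noteq> 0" using LeastI[of "\<lambda>k. k < length fs \<and> c k \<noteq> 0" i] i ci
        unfolding i0_def by auto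
      have i0min: "c k = 0" if "k < i0" for k
        using not_less_Least[of k "\<lambda>k. k < length fs \<and> c k \<noteq> 0"] that i0 unfolding i0_def by auto
      define mu where "mu = init_mon (fs ! i0)"
      have "0 = Poly_Mapping.lookup (\<Sum>i<length fs. smul (c i) (fs ! i)) mu" using sum0 by simp
      also have "\<dots> = (\<Sum>k<length fs. c k * Poly_Mapping.lookup (fs ! k) mu)"
        by (simp add: lookup_sum)
      also have "\<dots> = (\<Sum>k\<in>{i0}. c k * Poly_Mapping.lookup (fs ! k) mu)"
      proof (rule sum.mono_neutral_right)
        show "\<forall>k\<in>{..<length fs} - {i0}. c k * Poly_Mapping.lookup (fs ! k) mu = 0"
        proof
          fix k assume k: "k \<in> {..<length fs} - {i0}"
          show "c k * Poly_Mapping.lookup (fs ! k) mu = 0"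
          proof (cases "k < i0")
            case True then show ?thesis using i0min by simp
          next
            case False
            then have "i0 < k" using k by auto
            then have "init_mon (fs ! k) < mu" unfolding mu_def using less k by auto
            then have "mu \<notin> Poly_Mapping.keys (fs ! k)" using keys_le_init leD by blast
            then show ?thesis by (simp add: in_keys_iff)
          qed
        qed
      qed (use i0 in auto)
      also have "\<dots> = c i0 * Poly_Mapping.lookup (fs ! i0) mu" by simp
      finally have "c i0 * Poly_Mapping.lookup (fs ! i0) mu = 0" by simp
      moreover have "fs ! i0 \<noteq> 0" using fs0 i0 nth_mem by metis
      then have "Poly_Mapping.lookup (fs ! i0) mu \<noteq> 0" unfolding mu_def using init_in_keys by (simp add: in_keys_iff)
      ultimately show False using i0 by simp
    qed
  qed
  have spV: "K.span (set fs) \<subseteq> V" using K.span_minimal[OF fsV sub] .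
  have Vsp: "v \<in> K.span (set fs)" if "v \<in> V" for v
  proof -
    have "\<forall>v. v \<in> V \<longrightarrow> card {nu\<in>M. nu < init_mon v} = n \<longrightarrow> v \<in> K.span (set fs)" for n
    proof (induction n rule: less_induct)
      case (less n)
      show ?case
      proof (intro allI impI)
        fix v assume v: "v \<in> V" and n: "card {nu\<in>M. nu < init_mon v} = n"
        show "v \<in> K.span (set fs)"
        proof (cases "v = 0")
          case True then show ?thesis by (simp add: K.span_zero)
        next
          case False
          define mu where "mu = init_mon v"
          have muM: "mu \<in> M" unfolding mu_def M_def using v False by blast
          define p where "p = pick mu"
          have p: "p \<in> V" "p \<noteq> 0" "init_mon p = mu" using pick[OF muM] unfolding p_def by auto
          have pfs: "p \<in> set fs" unfolding p_def fs_def using muM setL by auto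
          define c where "c = Poly_Mapping.lookup v mu / Poly_Mapping.lookup p mu"
          define v' where "v' = v - smul c p"
          have pmu: "Poly_Mapping.lookup p mu \<noteq> 0" using init_in_keys[OF p(2)] p(3) by (simp add: in_keys_iff)
          have v'V: "v' \<in> V" unfolding v'_def using K.subspace_diff[OF sub v K.subspace_scale[OF sub p(1)]] .
          have "v' \<in> K.span (set fs)"
          proof (cases "v' = 0")
            case True then show ?thesis by (simp add: K.span_zero)
          next
            case False
            have keys': "\<forall>nu\<in>Poly_Mapping.keys v'. nu < mu"
            proof
              fix nu assume nu: "nu \<in> Poly_Mapping.keys v'"
              have "nu \<in> Poly_Mapping.keys v \<or> nu \<in> Poly_Mapping.keys p"
                using nu unfolding v'_def by (auto simp: in_keys_iff lookup_minus)
              then have "nu \<le> mu" using keys_le_init[of nu v] keys_le_init[of nu p] p(3) unfolding mu_def by auto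
              moreover have "nu \<noteq> mu"
                using nu pmu unfolding v'_def c_def by (auto simp: in_keys_iff lookup_minus)
              ultimately show "nu < mu" by simp
            qed
            then have lt: "init_mon v' < mu" using init_in_keys[OF False] by blast
            have i'M: "init_mon v' \<in> M" unfolding M_def using v'V False by blast
            have sub1: "{nu\<in>M. nu < init_mon v'} \<subset> {nu\<in>M. nu < init_mon v}"
              using lt i'M unfolding mu_def by auto
            have "card {nu\<in>M. nu < init_mon v'} < n"
              using psubset_card_mono[OF _ sub1] finM n by auto
            then show ?thesis using less v'V by blast
          qed
          moreover have "smul c p \<in> K.span (set fs)" using pfs by (simp add: K.span_base K.span_scale)
          ultimately have "v' + smul c p \<in> K.span (set fs)" by (rule K.span_add)
          then show ?thesis unfolding v'_def by simp
        qed
      qed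
    qed
    then show ?thesis using that by blast
  qed
  have "is_basisK V fs" unfolding is_basisK_def spanK_eq using fsV li spV Vsp by blast
  then show ?thesis using sfs imfs fs0 unfolding M_def by blast
qed

lemma hcomp_keys: "Poly_Mapping.keys (hcomp t f) = {mu\<in>Poly_Mapping.keys f. tdeg mu = t}"
  by (simp add: hcomp_eq keys_projP)

lemma hcomp_nz: "mu \<in> Poly_Mapping.keys f \<Longrightarrow> hcomp (tdeg mu) f \<noteq> 0"
  using hcomp_keys[of "tdeg mu" f] by force

lemma mdeg_props: assumes "f \<noteq> 0"
  shows "hcomp (mdeg f) f \<noteq> 0" "\<forall>mu\<in>Poly_Mapping.keys f. mdeg f \<le> tdeg mu"
proof -
  obtain mu where mu: "mu \<in> Poly_Mapping.keys f" using assms by (metis all_not_in_conv keys_eq_empty)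
  show "hcomp (mdeg f) f \<noteq> 0" unfolding mdeg_def by (rule LeastI[of _ "tdeg mu"]) (rule hcomp_nz[OF mu])
  show "\<forall>mu\<in>Poly_Mapping.keys f. mdeg f \<le> tdeg mu" unfolding mdeg_def
    using hcomp_nz by (blast intro: Least_le)
qed

lemma ideal_low:
  assumes "J \<noteq> {0}" "0 \<in> J"
  shows "\<exists>a\<in>J. a \<noteq> 0 \<and> mdeg a = mdeg_ideal J"
    and "\<forall>f\<in>J. \<forall>mu\<in>Poly_Mapping.keys f. mdeg_ideal J \<le> tdeg mu"
proof -
  obtain a where a: "a \<in> J" "a \<noteq> 0" using assms by auto
  show "\<exists>a\<in>J. a \<noteq> 0 \<and> mdeg a = mdeg_ideal J"
    unfolding mdeg_ideal_def by (rule LeastI_ex) (use a in blast)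
  show "\<forall>f\<in>J. \<forall>mu\<in>Poly_Mapping.keys f. mdeg_ideal J \<le> tdeg mu"
  proof (intro ballI)
    fix f mu assume f: "f \<in> J" and mu: "mu \<in> Poly_Mapping.keys f"
    then have "f \<noteq> 0" by auto
    then have "mdeg_ideal J \<le> mdeg f" unfolding mdeg_ideal_def using f by (auto intro: Least_le)
    also have "\<dots> \<le> tdeg mu" using mdeg_props(2)[OF \<open>f \<noteq> 0\<close>] mu by blast
    finally show "mdeg_ideal J \<le> tdeg mu" .
  qed
qed

lemma hcomp_low_keys: "\<forall>mu\<in>Poly_Mapping.keys (hcomp t f). tdeg mu = t"
  by (simp add: hcomp_keys)

lemma hcomp_add: "hcomp t (f + g) = hcomp t f + hcomp t g"
  by (simp add: hcomp_eq projP_add)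

lemma hcomp_zero_const: "hcomp 0 r = Poly_Mapping.single 0 (Poly_Mapping.lookup r 0)"
  by (rule poly_mapping_eqI) (auto simp: lookup_hcomp lookup_single when_def tdeg_zero_iff)

interpretation TD: weight tdeg
  by unfold_locales (rule tdeg_add)

definition mdvd :: "(nat \<Rightarrow>\<^sub>0 nat) set \<Rightarrow> (nat \<Rightarrow>\<^sub>0 nat) \<Rightarrow> bool" where
  "mdvd G mu \<longleftrightarrow> (\<exists>g\<in>G. \<exists>c. mu = g + c)"

lemma mdvd_add: "mdvd G mu \<Longrightarrow> mdvd G (a + mu)"
  unfolding mdvd_def by (metis add.assoc add.commute)

lemma keys_sub_add: "Poly_Mapping.keys c \<subseteq> Poly_Mapping.keys (g + (c :: nat \<Rightarrow>\<^sub>0 nat))"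
  by (auto simp: in_keys_iff lookup_add)

lemma mdvd_self: "g \<in> G \<Longrightarrow> mdvd G g"
  by (metis add_0_right mdvd_def)

locale monid =
  fixes D :: "'k::field set" and N m :: nat and Nm :: "(nat \<Rightarrow>\<^sub>0 nat) set"
  assumes D: "is_subring D" and N: "N \<ge> 2" and m: "m \<ge> 1"
    and Nm: "Nm \<subseteq> {monXY (m - i) i |i. i \<le> m}"
begin

definition G0 where "G0 = {monXY m 0, monXY 0 m} \<union> Nm"
definition I where "I = ideal_gen D N (mpoly_of_mon ` G0 :: 'k mpoly set)"
definition MI :: "'k mpoly set" where "MI = {h \<in> PolyR D N. \<forall>mu\<in>Poly_Mapping.keys h. mdvd G0 mu}"

lemma G0_form: "g \<in> G0 \<Longrightarrow> \<exists>i\<le>m. g = monXY (m - i) i"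
  unfolding G0_def using Nm by (auto intro: exI[of _ 0] exI[of _ m])

lemma G0_tdeg: "g \<in> G0 \<Longrightarrow> tdeg g = m"
  using G0_form tdeg_monXY by fastforce

lemma G0_vars: "g \<in> G0 \<Longrightarrow> vars_ok N g"
  using G0_form keys_monXY N unfolding vars_ok_def by fastforce

lemma keys_mon: "Poly_Mapping.keys (mpoly_of_mon g :: 'k mpoly) = {g}"
  by (simp add: mpoly_of_mon_def)

lemma G_R: "(mpoly_of_mon ` G0 :: 'k mpoly set) \<subseteq> PolyR D N"
  unfolding mpoly_of_mon_def using PolyR_single[OF D] G0_vars D unfolding is_subring_def by blast

lemma I_ideal: "is_ideal D N I"
  unfolding I_def using gen_ideal[OF D G_R] .

lemma MI_ideal: "is_ideal D N MI"
  unfolding is_ideal_def MI_def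
proof (intro conjI ballI)
  show "0 \<in> {h \<in> PolyR D N. \<forall>mu\<in>Poly_Mapping.keys h. mdvd G0 mu}" using PolyR_zero[OF D] by simp
  fix f g assume f: "f \<in> {h \<in> PolyR D N. \<forall>mu\<in>Poly_Mapping.keys h. mdvd G0 mu}"
    and g: "g \<in> {h \<in> PolyR D N. \<forall>mu\<in>Poly_Mapping.keys h. mdvd G0 mu}"
  show "f + g \<in> {h \<in> PolyR D N. \<forall>mu\<in>Poly_Mapping.keys h. mdvd G0 mu}"
    using f g PolyR_add[OF D] keys_add[of f g] by blast
next
  fix r f assume r: "r \<in> PolyR D N" and f: "f \<in> {h \<in> PolyR D N. \<forall>mu\<in>Poly_Mapping.keys h. mdvd G0 mu}"
  have "\<forall>mu\<in>Poly_Mapping.keys (r * f). mdvd G0 mu"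
    using keys_mult[of r f] f mdvd_add by fastforce
  then show "r * f \<in> {h \<in> PolyR D N. \<forall>mu\<in>Poly_Mapping.keys h. mdvd G0 mu}"
    using PolyR_mult[OF D r] f by blast
qed auto

lemma G_MI: "(mpoly_of_mon ` G0 :: 'k mpoly set) \<subseteq> MI"
  unfolding MI_def using G_R by (auto simp: keys_mon mdvd_self)

lemma I_sub_MI: "I \<subseteq> MI"
  unfolding I_def by (rule gen_least[OF MI_ideal G_MI])

lemma MI_sub_I: "MI \<subseteq> I"
proof
  fix h assume h: "h \<in> MI"
  have "h = (\<Sum>mu\<in>Poly_Mapping.keys h. Poly_Mapping.single mu (Poly_Mapping.lookup h mu))"
    by (rule poly_decomp)
  also have "\<dots> \<in> I"
  proof (rule ideal_sum[OF I_ideal finite_keys])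
    fix mu assume mu: "mu \<in> Poly_Mapping.keys h"
    then obtain g c where g: "g \<in> G0" and mug: "mu = g + c" using h unfolding MI_def mdvd_def by blast
    have e: "Poly_Mapping.single mu (Poly_Mapping.lookup h mu) = Poly_Mapping.single c (Poly_Mapping.lookup h mu) * mpoly_of_mon g"
      unfolding mpoly_of_mon_def mult_single mug by (simp add: add.commute)
    have "vars_ok N mu" using h mu unfolding MI_def PolyR_iff by blast
    then have "vars_ok N c" using keys_sub_add[of c g] unfolding mug vars_ok_def by blast
    moreover have "Poly_Mapping.lookup h mu \<in> D" using h unfolding MI_def PolyR_iff by blast
    ultimately have "Poly_Mapping.single c (Poly_Mapping.lookup h mu) \<in> PolyR D N" using PolyR_single[OF D] by blast
    moreover have "mpoly_of_mon g \<in> I" unfolding I_def using gen_sup g by blast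
    ultimately show "Poly_Mapping.single mu (Poly_Mapping.lookup h mu) \<in> I"
      unfolding e using ideal_multR[OF I_ideal] by blast
  qed
  finally show "h \<in> I" .
qed

lemma I_eq: "I = MI" using I_sub_MI MI_sub_I by blast

lemma I_keys_deg: "h \<in> I \<Longrightarrow> \<forall>mu\<in>Poly_Mapping.keys h. m \<le> tdeg mu"
  using G0_tdeg unfolding I_eq MI_def mdvd_def by (force simp: tdeg_add)

lemma I_hcomp_keys: "h \<in> I \<Longrightarrow> \<forall>mu\<in>Poly_Mapping.keys (hcomp m h). mu \<in> G0"
proof
  fix mu assume h: "h \<in> I" and mu: "mu \<in> Poly_Mapping.keys (hcomp m h)"
  then have mu': "mu \<in> Poly_Mapping.keys h" "tdeg mu = m" by (auto simp: hcomp_keys)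
  then obtain g c where "g \<in> G0" "mu = g + c" using h unfolding I_eq MI_def mdvd_def by blast
  moreover have "tdeg c = 0" using G0_tdeg calculation mu'(2) by (simp add: tdeg_add)
  ultimately show "mu \<in> G0" by (simp add: tdeg_zero_iff)
qed

lemma compK_I_keys: "x \<in> compK I m \<Longrightarrow> \<forall>mu\<in>Poly_Mapping.keys x. mu \<in> G0"
  unfolding compK_def spanK_eq comp_set_def
  using span_keys[of "hcomp m ` I" "\<lambda>mu. mu \<in> G0" x] I_hcomp_keys by blast

lemma mon_in_compK: assumes "g \<in> G0" shows "mpoly_of_mon g \<in> compK I m"
proof -
  have "hcomp m (mpoly_of_mon g) = (mpoly_of_mon g :: 'k mpoly)"
    unfolding hcomp_eq by (rule projP_id) (simp add: keys_mon G0_tdeg[OF assms])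
  moreover have "mpoly_of_mon g \<in> I" unfolding I_def using gen_sup assms by blast
  ultimately have "mpoly_of_mon g \<in> comp_set I m" unfolding comp_set_def by force
  then show ?thesis unfolding compK_def spanK_eq by (rule K.span_base)
qed

lemma Xm_G0: "monXY m 0 \<in> G0" and Ym_G0: "monXY 0 m \<in> G0"
  unfolding G0_def by auto

lemma mon_nz: "(mpoly_of_mon g :: 'k mpoly) \<noteq> 0"
  using keys_mon[of g] by auto

lemma I_nz: "I \<in> nz_ideals D N"
  unfolding nz_ideals_def using I_ideal mon_nz gen_sup[of "mpoly_of_mon ` G0" D N] Xm_G0
  unfolding I_def by blast

lemma nzd:
  assumes a0: "a0 \<in> PolyR D N" "Poly_Mapping.lookup a0 0 \<noteq> 0" and b: "b \<in> PolyR D N" and ab: "a0 * b \<in> MI"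
  shows "b \<in> MI"
proof (rule ccontr)
  assume nb: "b \<notin> MI"
  define T where "T = {mu\<in>Poly_Mapping.keys b. \<not> mdvd G0 mu}"
  have Tne: "T \<noteq> {}" using nb b unfolding MI_def T_def by blast
  define n0 where "n0 = (LEAST n. \<exists>mu\<in>T. tdeg mu = n)"
  obtain mu where mu: "mu \<in> T" "tdeg mu = n0"
    using LeastI_ex[of "\<lambda>n. \<exists>mu\<in>T. tdeg mu = n"] Tne unfolding n0_def by blast
  have minT: "n0 \<le> tdeg nu" if "nu \<in> T" for nu
    unfolding n0_def using that by (auto intro: Least_le)
  define c where "c = Poly_Mapping.lookup a0 0"
  define a' where "a' = projP (\<lambda>x. x \<noteq> 0) a0"
  define b1 where "b1 = projP (mdvd G0) b"
  define b2 where "b2 = projP (\<lambda>x. \<not> mdvd G0 x) b"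
  have a0e: "a0 = Poly_Mapping.single 0 c + a'"
    unfolding a'_def c_def by (rule poly_mapping_eqI) (simp add: lookup_add lookup_projP lookup_single when_def)
  have be: "b = b1 + b2" unfolding b1_def b2_def by (rule projP_split)
  have e1: "a0 * b = Poly_Mapping.single 0 c * b + a' * b" by (subst a0e) (simp add: distrib_right)
  have e2: "a' * b = a' * b1 + a' * b2" by (subst be) (simp add: distrib_left)
  have e: "a0 * b = smul c b + a' * b1 + a' * b2"
    unfolding smul_conv e1 e2 by (simp add: add.assoc)
  have z1: "Poly_Mapping.lookup (a' * b1) mu = 0"
  proof -
    have "\<forall>x\<in>Poly_Mapping.keys (a' * b1). mdvd G0 x"
      using keys_mult[of a' b1] mdvd_add unfolding b1_def keys_projP by fastforce
    then show ?thesis using mu(1) unfolding T_def by (auto simp: in_keys_iff)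
  qed
  have z2: "Poly_Mapping.lookup (a' * b2) mu = 0"
  proof -
    have "\<forall>x\<in>Poly_Mapping.keys (a' * b2). Suc n0 \<le> tdeg x"
    proof
      fix x assume "x \<in> Poly_Mapping.keys (a' * b2)"
      then obtain p q where "x = p + q" "p \<in> Poly_Mapping.keys a'" "q \<in> Poly_Mapping.keys b2"
        using keys_mult by blast
      moreover have "p \<noteq> 0" using calculation(2) unfolding a'_def keys_projP by auto
      then have "1 \<le> tdeg p" using tdeg_zero_iff by (metis less_one not_less)
      moreover have "q \<in> T" using calculation(3) unfolding b2_def keys_projP T_def by auto
      ultimately show "Suc n0 \<le> tdeg x" using minT[of q] by (simp add: tdeg_add)
    qed
    then have "mu \<notin> Poly_Mapping.keys (a' * b2)" using mu(2) by fastforce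
    then show ?thesis by (simp add: in_keys_iff)
  qed
  have "Poly_Mapping.lookup (a0 * b) mu = c * Poly_Mapping.lookup b mu"
    unfolding e using z1 z2 by (simp add: lookup_add)
  moreover have "c \<noteq> 0" "Poly_Mapping.lookup b mu \<noteq> 0" using a0 mu unfolding c_def T_def by (auto simp: in_keys_iff)
  ultimately have "mu \<in> Poly_Mapping.keys (a0 * b)" by (simp add: in_keys_iff)
  then have "mdvd G0 mu" using ab unfolding MI_def by blast
  then show False using mu(1) unfolding T_def by blast
qed

end

lemma hcomp_0[simp]: "hcomp t 0 = 0"
  by (simp add: hcomp_def)

lemma subspace_pre_r: "K.subspace T \<Longrightarrow> K.subspace {v :: 'k::field mpoly. v * w \<in> T}"
  unfolding K.subspace_def by (simp add: distrib_right smul_conv mult.assoc)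

lemma subspace_pre_l: "K.subspace T \<Longrightarrow> K.subspace {w :: 'k::field mpoly. x * w \<in> T}"
  unfolding K.subspace_def by (simp add: distrib_left smul_conv mult.left_commute[of x])

lemma hcomp_span_keys: "x \<in> compK J t \<Longrightarrow> \<forall>mu\<in>Poly_Mapping.keys x. tdeg mu = t"
  unfolding compK_def spanK_eq comp_set_def
  by (rule span_keys[of "hcomp t ` J" "\<lambda>mu. tdeg mu = t" x]) (auto simp: hcomp_keys)

locale fact = monid +
  fixes A B :: "'a mpoly set"
  assumes A: "A \<in> nz_ideals D N" "A \<noteq> PolyR D N"
    and B: "B \<in> nz_ideals D N" "B \<noteq> PolyR D N"
    and I_AB: "I = ideal_mult D N A B"
begin

definition "d = mdeg_ideal A"
definition "e = mdeg_ideal B"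
definition "VA = compK A d"
definition "VB = compK B e"

lemma A_ideal: "is_ideal D N A" and B_ideal: "is_ideal D N B"
  using A B unfolding nz_ideals_def by auto

lemma A_nz: "A \<noteq> {0}" and B_nz: "B \<noteq> {0}"
  using A B unfolding nz_ideals_def by auto

lemma A0: "0 \<in> A" and B0: "0 \<in> B"
  using A_ideal B_ideal unfolding is_ideal_def by auto

lemma lowA: "\<forall>f\<in>A. \<forall>mu\<in>Poly_Mapping.keys f. d \<le> tdeg mu"
  unfolding d_def using ideal_low(2)[OF A_nz A0] .

lemma lowB: "\<forall>f\<in>B. \<forall>mu\<in>Poly_Mapping.keys f. e \<le> tdeg mu"
  unfolding e_def using ideal_low(2)[OF B_nz B0] .

lemma exA: "\<exists>a\<in>A. a \<noteq> 0 \<and> mdeg a = d"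
  unfolding d_def using ideal_low(1)[OF A_nz A0] .

lemma exB: "\<exists>b\<in>B. b \<noteq> 0 \<and> mdeg b = e"
  unfolding e_def using ideal_low(1)[OF B_nz B0] .

lemma prod_in_I: "a \<in> A \<Longrightarrow> b \<in> B \<Longrightarrow> a * b \<in> I"
  unfolding I_AB by (rule ideal_mult_gen)

lemma hprod: assumes "a \<in> A" "b \<in> B"
  shows "hcomp (d + e) (a * b) = hcomp d a * hcomp e b"
  unfolding hcomp_eq by (rule TD.prod_low_eq[OF bspec[OF lowA assms(1)] bspec[OF lowB assms(2)]])

lemma hprod_keys: assumes "a \<in> A" "b \<in> B"
  shows "\<forall>mu\<in>Poly_Mapping.keys (a * b). d + e \<le> tdeg mu"
  by (rule TD.prod_low[OF bspec[OF lowA assms(1)] bspec[OF lowB assms(2)]])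

definition "SP = spprod VA VB"

lemma SP_span: "SP = K.span {v * w |v w. v \<in> VA \<and> w \<in> VB}"
  unfolding SP_def spprod_def spanK_eq ..

lemma SP_sub: "K.subspace SP"
  unfolding SP_span by (rule K.subspace_span)

definition "S = {h \<in> PolyR D N. (\<forall>mu\<in>Poly_Mapping.keys h. d + e \<le> tdeg mu) \<and> hcomp (d + e) h \<in> SP}"

lemma S_ideal: "is_ideal D N S"
  unfolding is_ideal_def
proof (intro conjI ballI)
  show "S \<subseteq> PolyR D N" unfolding S_def by blast
  show "0 \<in> S" unfolding S_def using PolyR_zero[OF D] K.subspace_0[OF SP_sub] by simp
  fix f g assume f: "f \<in> S" and g: "g \<in> S"
  have "f + g \<in> PolyR D N" using f g PolyR_add[OF D] unfolding S_def by blast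
  moreover have "\<forall>mu\<in>Poly_Mapping.keys (f + g). d + e \<le> tdeg mu"
    using f g keys_add[of f g] unfolding S_def by blast
  moreover have "hcomp (d + e) (f + g) \<in> SP"
    using f g K.subspace_add[OF SP_sub] unfolding S_def hcomp_add by blast
  ultimately show "f + g \<in> S" unfolding S_def by blast
next
  fix r f assume r: "r \<in> PolyR D N" and f: "f \<in> S"
  have k: "\<forall>mu\<in>Poly_Mapping.keys (r * f). 0 + (d + e) \<le> tdeg mu"
    by (rule TD.prod_low) (use f in \<open>auto simp: S_def\<close>)
  have "hcomp (0 + (d + e)) (r * f) = hcomp 0 r * hcomp (d + e) f"
    unfolding hcomp_eq by (rule TD.prod_low_eq) (use f in \<open>auto simp: S_def\<close>)
  also have "\<dots> = smul (Poly_Mapping.lookup r 0) (hcomp (d + e) f)"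
    by (simp add: hcomp_zero_const smul_conv)
  finally have "hcomp (d + e) (r * f) \<in> SP"
    using K.subspace_scale[OF SP_sub] f unfolding S_def by simp
  then show "r * f \<in> S" using k PolyR_mult[OF D r] f unfolding S_def by simp
qed

lemma VA_span: "VA = K.span (hcomp d ` A)"
  unfolding VA_def compK_def spanK_eq comp_set_def ..

lemma VB_span: "VB = K.span (hcomp e ` B)"
  unfolding VB_def compK_def spanK_eq comp_set_def ..

lemma hA: "a \<in> A \<Longrightarrow> hcomp d a \<in> VA"
  unfolding VA_def compK_def spanK_eq comp_set_def by (rule K.span_base) blast

lemma hB: "b \<in> B \<Longrightarrow> hcomp e b \<in> VB"
  unfolding VB_def compK_def spanK_eq comp_set_def by (rule K.span_base) blast

lemma I_sub_S: "I \<subseteq> S"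
  unfolding I_AB
proof (rule ideal_mult_least[OF S_ideal])
  fix a b assume a: "a \<in> A" and b: "b \<in> B"
  have "a * b \<in> PolyR D N" using PolyR_mult[OF D] a b ideal_sub A_ideal B_ideal by blast
  moreover have "hcomp (d + e) (a * b) \<in> SP"
    unfolding hprod[OF a b] SP_span by (rule K.span_base) (use hA[OF a] hB[OF b] in blast)
  ultimately show "a * b \<in> S" unfolding S_def using hprod_keys[OF a b] by blast
qed

lemma m_eq: "m = d + e"
proof -
  obtain a0 where a0: "a0 \<in> A" "a0 \<noteq> 0" "mdeg a0 = d" using exA by blast
  obtain b0 where b0: "b0 \<in> B" "b0 \<noteq> 0" "mdeg b0 = e" using exB by blast
  have "hcomp (d + e) (a0 * b0) \<noteq> 0"
    unfolding hprod[OF a0(1) b0(1)] using mdeg_props(1)[OF a0(2)] mdeg_props(1)[OF b0(2)] a0(3) b0(3) by simp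
  then obtain mu where "mu \<in> Poly_Mapping.keys (hcomp (d + e) (a0 * b0))" by (metis all_not_in_conv keys_eq_empty)
  then have "mu \<in> Poly_Mapping.keys (a0 * b0)" "tdeg mu = d + e" by (auto simp: hcomp_keys)
  then have le1: "m \<le> d + e" using I_keys_deg[OF prod_in_I[OF a0(1) b0(1)]] by auto
  have "mpoly_of_mon (monXY m 0) \<in> I" unfolding I_def using gen_sup Xm_G0 by blast
  then have "mpoly_of_mon (monXY m 0) \<in> S" using I_sub_S by blast
  then have "d + e \<le> tdeg (monXY m 0)" unfolding S_def by (auto simp: keys_mon)
  then show ?thesis using le1 by (simp add: tdeg_monXY)
qed

lemma compK_I: "compK I m = SP"
proof
  show "compK I m \<subseteq> SP"
    unfolding compK_def spanK_eq comp_set_def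
    by (rule K.span_minimal[OF _ SP_sub]) (use I_sub_S m_eq in \<open>auto simp: S_def\<close>)
next
  let ?T = "compK I m"
  have Tsub: "K.subspace ?T" unfolding compK_def spanK_eq by (rule K.subspace_span)
  have step1: "hcomp d a * hcomp e b \<in> ?T" if "a \<in> A" "b \<in> B" for a b
  proof -
    have "hcomp m (a * b) \<in> ?T" unfolding compK_def spanK_eq comp_set_def
      by (rule K.span_base) (use prod_in_I[OF that] in blast)
    then show ?thesis using hprod[OF that] m_eq by simp
  qed
  have step2: "hcomp d a * w \<in> ?T" if "a \<in> A" "w \<in> VB" for a w
  proof -
    have "VB \<subseteq> {w. hcomp d a * w \<in> ?T}"
      unfolding VB_span
      by (rule K.span_minimal[OF _ subspace_pre_l[OF Tsub]]) (use step1 that in blast)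
    then show ?thesis using that by blast
  qed
  have step3: "v * w \<in> ?T" if "v \<in> VA" "w \<in> VB" for v w
  proof -
    have "VA \<subseteq> {v. v * w \<in> ?T}"
      unfolding VA_span
      by (rule K.span_minimal[OF _ subspace_pre_r[OF Tsub]]) (use step2 that in blast)
    then show ?thesis using that by blast
  qed
  show "SP \<subseteq> ?T" unfolding SP_span
    by (rule K.span_minimal[OF _ Tsub]) (use step3 in blast)
qed

end

lemma prod_list_replicate:
  assumes D: "is_subring D" and AsI: "\<forall>x\<in>set As. is_ideal D N x" and IsI: "\<forall>x\<in>set Is. is_ideal D N x"
    and fixq: "ideal_mult D N (ideal_prod_list D N As) (ideal_prod_list D N Is) = ideal_prod_list D N Is"
  shows "ideal_prod_list D N (concat (replicate n As) @ Is) = ideal_prod_list D N Is"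
proof (induction n)
  case 0 then show ?case by simp
next
  case (Suc n)
  have all: "\<forall>x\<in>set (concat (replicate n As) @ Is). is_ideal D N x" using AsI IsI by auto
  have "ideal_prod_list D N (concat (replicate (Suc n) As) @ Is) = ideal_prod_list D N (As @ (concat (replicate n As) @ Is))"
    by simp
  also have "\<dots> = ideal_mult D N (ideal_prod_list D N As) (ideal_prod_list D N (concat (replicate n As) @ Is))"
    by (rule prod_list_append[OF D AsI all])
  also have "\<dots> = ideal_prod_list D N Is" using Suc fixq by simp
  finally show ?case .
qed

context fact
begin

lemma d_pos: assumes BF: "ideals_BF D N" shows "1 \<le> d"
proof (rule ccontr)
  assume "\<not> 1 \<le> d"
  then have d0: "d = 0" by simp
  obtain a0 where a0: "a0 \<in> A" "a0 \<noteq> 0" "mdeg a0 = 0" using exA d0 by auto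
  have "hcomp 0 a0 \<noteq> 0" using mdeg_props(1)[OF a0(2)] a0(3) by simp
  then have c: "Poly_Mapping.lookup a0 0 \<noteq> 0" by (metis hcomp_zero_const single_zero)
  have a0R: "a0 \<in> PolyR D N" using a0(1) A_ideal ideal_sub by blast
  have BI: "B \<subseteq> I"
  proof
    fix b assume b: "b \<in> B"
    have bR: "b \<in> PolyR D N" using b B_ideal ideal_sub by blast
    have "a0 * b \<in> MI" using prod_in_I[OF a0(1) b] I_eq by simp
    then have "b \<in> MI" using nzd[OF a0R c bR] by blast
    then show "b \<in> I" using I_eq by simp
  qed
  have AR: "A \<subseteq> PolyR D N" using A_ideal ideal_sub by blast
  have AI_ideal: "is_ideal D N (ideal_mult D N A I)" using ideal_mult_ideal[OF D AR ideal_sub[OF I_ideal]] .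
  have fixI: "ideal_mult D N A I = I"
  proof
    show "ideal_mult D N A I \<subseteq> I"
      by (rule ideal_mult_least[OF I_ideal]) (use AR ideal_multR[OF I_ideal] in blast)
    show "I \<subseteq> ideal_mult D N A I"
      by (subst (1) I_AB, rule ideal_mult_least[OF AI_ideal]) (use BI ideal_mult_gen in blast)
  qed
  have BF1: "\<forall>J\<in>nz_ideals D N. (\<exists>As. (\<forall>A\<in>set As. ideal_atom D N A) \<and> J = ideal_prod_list D N As) \<and>
     finite {length As |As. (\<forall>A\<in>set As. ideal_atom D N A) \<and> J = ideal_prod_list D N As}"
    using BF unfolding ideals_BF_def .
  obtain As where As: "\<forall>x\<in>set As. ideal_atom D N x" "A = ideal_prod_list D N As" using BF1 A(1) by blast
  obtain Is where Is: "\<forall>x\<in>set Is. ideal_atom D N x" "I = ideal_prod_list D N Is" using BF1 I_nz by blast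
  have fin: "finite {length Ls |Ls. (\<forall>x\<in>set Ls. ideal_atom D N x) \<and> I = ideal_prod_list D N Ls}"
    using BF1 I_nz by blast
  have AsI: "\<forall>x\<in>set As. is_ideal D N x" using As(1) unfolding ideal_atom_def nz_ideals_def by blast
  have IsI: "\<forall>x\<in>set Is. is_ideal D N x" using Is(1) unfolding ideal_atom_def nz_ideals_def by blast
  have Asne: "As \<noteq> []" using As(2) A(2) by (auto simp: prod_list_Nil)
  have mem: "length (concat (replicate n As) @ Is) \<in> {length Ls |Ls. (\<forall>x\<in>set Ls. ideal_atom D N x) \<and> I = ideal_prod_list D N Ls}" for n
  proof -
    have "ideal_prod_list D N (concat (replicate n As) @ Is) = I"
      using prod_list_replicate[OF D AsI IsI] fixI As(2) Is(2) by simp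
    moreover have "\<forall>x\<in>set (concat (replicate n As) @ Is). ideal_atom D N x" using As(1) Is(1) by auto
    ultimately show ?thesis by blast
  qed
  have len: "n \<le> length (concat (replicate n As) @ Is)" for n
  proof -
    have "length (concat (replicate n As)) = n * length As" by (simp add: length_concat sum_list_replicate)
    moreover have "1 \<le> length As" using Asne by (cases As) auto
    moreover have "n \<le> n * length As" using calculation(2) by (metis mult.right_neutral mult_le_mono2 One_nat_def)
    ultimately show ?thesis unfolding length_append by linarith
  qed
  define K where "K = Max {length Ls |Ls. (\<forall>x\<in>set Ls. ideal_atom D N x) \<and> I = ideal_prod_list D N Ls}"
  have "length (concat (replicate (Suc K) As) @ Is) \<le> K"
    unfolding K_def using Max_ge[OF fin mem] by blast
  then show False using len[of "Suc K"] by simp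
qed

end

definition xy :: "(nat \<Rightarrow>\<^sub>0 nat) \<Rightarrow> nat" where
  "xy mu = Poly_Mapping.lookup mu 0 + Poly_Mapping.lookup mu 1"

interpretation XY: weight xy
  by unfold_locales (simp add: xy_def lookup_add)

definition XYd :: "nat \<Rightarrow> (nat \<Rightarrow>\<^sub>0 nat) set" where
  "XYd k = {monXY (k - i) i |i. i \<le> k}"

lemma xy_monXY: "xy (monXY a b) = a + b"
  by (simp add: xy_def lookup_monXY)

lemma xy_tdeg: "xy mu \<le> tdeg mu" "xy mu = tdeg mu \<Longrightarrow> mu = monXY (Poly_Mapping.lookup mu 0) (Poly_Mapping.lookup mu 1)"
proof -
  let ?S = "Poly_Mapping.keys mu \<union> {0, 1}"
  have fin: "finite ?S" by simp
  have "tdeg mu = (\<Sum>v\<in>?S. Poly_Mapping.lookup mu v)" by (rule tdeg_superset) auto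
  also have "\<dots> = (\<Sum>v\<in>?S - {0, 1}. Poly_Mapping.lookup mu v) + (\<Sum>v\<in>{0, 1}. Poly_Mapping.lookup mu v)"
    by (rule sum.subset_diff) auto
  also have "(\<Sum>v\<in>{0, 1}. Poly_Mapping.lookup mu v) = xy mu" by (simp add: xy_def)
  finally have e: "tdeg mu = (\<Sum>v\<in>?S - {0, 1}. Poly_Mapping.lookup mu v) + xy mu" .
  then show "xy mu \<le> tdeg mu" by simp
  assume "xy mu = tdeg mu"
  then have "(\<Sum>v\<in>?S - {0, 1}. Poly_Mapping.lookup mu v) = 0" using e by simp
  then have z: "\<forall>v\<in>?S - {0, 1}. Poly_Mapping.lookup mu v = 0" using fin by simp
  show "mu = monXY (Poly_Mapping.lookup mu 0) (Poly_Mapping.lookup mu 1)"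
  proof (rule poly_mapping_eqI)
    fix v
    show "Poly_Mapping.lookup mu v = Poly_Mapping.lookup (monXY (Poly_Mapping.lookup mu 0) (Poly_Mapping.lookup mu 1)) v"
    proof (cases "v = 0 \<or> v = 1")
      case True then show ?thesis by (auto simp: lookup_monXY)
    next
      case False
      then have "Poly_Mapping.lookup mu v = 0" using z by (auto simp: in_keys_iff)
      then show ?thesis using False by (simp add: lookup_monXY)
    qed
  qed
qed

lemma XYd_char: "mu \<in> XYd k \<Longrightarrow> mu = monXY (k - Poly_Mapping.lookup mu 1) (Poly_Mapping.lookup mu 1) \<and> Poly_Mapping.lookup mu 1 \<le> k"
  unfolding XYd_def by (auto simp: lookup_monXY)

lemma monXY_less: "0 < i \<Longrightarrow> i \<le> k \<Longrightarrow> monXY (k - i) i < monXY k 0"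
  unfolding lex_less_iff[symmetric] lex_less_def
  by (intro exI[of _ 0]) (simp add: lookup_monXY)

lemma XYd_le: assumes "mu \<in> XYd k" shows "mu \<le> monXY k 0"
proof -
  obtain i where i: "i \<le> k" "mu = monXY (k - i) i" using assms unfolding XYd_def by blast
  show ?thesis
  proof (cases "i = 0")
    case True then show ?thesis using i by simp
  next
    case False then show ?thesis using i monXY_less[of i k] by simp
  qed
qed

lemma finite_XYd: "finite (XYd k)"
proof -
  have "XYd k = (\<lambda>i. monXY (k - i) i) ` {..k}" unfolding XYd_def by auto
  then show ?thesis by simp
qed

lemma pure_gen:
  fixes v w :: "'k::field mpoly"
  assumes v: "\<forall>mu\<in>Poly_Mapping.keys v. tdeg mu = d" and w: "\<forall>mu\<in>Poly_Mapping.keys w. tdeg mu = e"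
    and w0: "w \<noteq> 0" and vw: "\<forall>mu\<in>Poly_Mapping.keys (v * w). xy mu = d + e"
  shows "\<forall>mu\<in>Poly_Mapping.keys v. xy mu = d"
proof (cases "v = 0")
  case True then show ?thesis by simp
next
  case False
  have kv: "Poly_Mapping.keys v \<noteq> {}" and kw: "Poly_Mapping.keys w \<noteq> {}" using False w0 by auto
  define a where "a = Min (xy ` Poly_Mapping.keys v)"
  define b where "b = Min (xy ` Poly_Mapping.keys w)"
  have ha: "\<forall>mu\<in>Poly_Mapping.keys v. a \<le> xy mu" unfolding a_def by simp
  have hb: "\<forall>mu\<in>Poly_Mapping.keys w. b \<le> xy mu" unfolding b_def by simp
  have "a \<in> xy ` Poly_Mapping.keys v" unfolding a_def by (rule Min_in) (use kv in auto)
  then obtain ma where ma: "ma \<in> Poly_Mapping.keys v" "xy ma = a" by blast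
  have "b \<in> xy ` Poly_Mapping.keys w" unfolding b_def by (rule Min_in) (use kw in auto)
  then obtain mb where mb: "mb \<in> Poly_Mapping.keys w" "xy mb = b" by blast
  have p1: "projP (\<lambda>mu. xy mu = a) v \<noteq> 0" using ma by (auto simp: keys_projP simp flip: keys_eq_empty)
  have p2: "projP (\<lambda>mu. xy mu = b) w \<noteq> 0" using mb by (auto simp: keys_projP simp flip: keys_eq_empty)
  have "projP (\<lambda>mu. xy mu = a + b) (v * w) \<noteq> 0"
    unfolding XY.prod_low_eq[OF ha hb] using p1 p2 by simp
  then obtain k where "k \<in> Poly_Mapping.keys (v * w)" "xy k = a + b"
    by (auto simp: keys_projP simp flip: keys_eq_empty)
  then have ab: "a + b = d + e" using vw by auto
  have "a \<le> d" using ma v xy_tdeg(1)[of ma] by auto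
  moreover have "b \<le> e" using mb w xy_tdeg(1)[of mb] by auto
  ultimately have "a = d" using ab by simp
  then show ?thesis using ha v xy_tdeg(1) by (metis le_antisym)
qed

lemma spprod_comm: "spprod V W = spprod W V"
proof -
  have "{v * w |v w. v \<in> V \<and> w \<in> W} = {v * w |v w. v \<in> W \<and> w \<in> V}"
    by (metis (no_types, opaque_lifting) mult.commute)
  then show ?thesis unfolding spprod_def by simp
qed


context fact
begin

lemma flip: "fact D N m Nm B A"
proof (rule fact.intro[OF monid_axioms], rule fact_axioms.intro)
  show "I = ideal_mult D N B A" using I_AB ideal_mult_comm by metis
qed (use A B in auto)

lemma VA_sub: "K.subspace VA" unfolding VA_span by (rule K.subspace_span)
lemma VB_sub: "K.subspace VB" unfolding VB_span by (rule K.subspace_span)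

lemma VA_keys: "v \<in> VA \<Longrightarrow> \<forall>mu\<in>Poly_Mapping.keys v. tdeg mu = d"
  unfolding VA_def by (rule hcomp_span_keys)

lemma VB_keys: "v \<in> VB \<Longrightarrow> \<forall>mu\<in>Poly_Mapping.keys v. tdeg mu = e"
  unfolding VB_def by (rule hcomp_span_keys)

lemma SP_keys: "x \<in> SP \<Longrightarrow> \<forall>mu\<in>Poly_Mapping.keys x. mu \<in> G0"
  using compK_I_keys compK_I by simp

lemma prod_SP: "v \<in> VA \<Longrightarrow> w \<in> VB \<Longrightarrow> v * w \<in> SP"
  unfolding SP_span by (rule K.span_base) blast

lemma G0_xy: "g \<in> G0 \<Longrightarrow> xy g = m"
  using G0_form xy_monXY by fastforce

lemma pureA: assumes v: "v \<in> VA" shows "\<forall>mu\<in>Poly_Mapping.keys v. mu \<in> XYd d"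
proof -
  obtain b0 where b0: "b0 \<in> B" "b0 \<noteq> 0" "mdeg b0 = e" using exB by blast
  define w0 where "w0 = hcomp e b0"
  have w0: "w0 \<in> VB" "w0 \<noteq> 0" using hB[OF b0(1)] mdeg_props(1)[OF b0(2)] b0(3) unfolding w0_def by auto
  have "\<forall>mu\<in>Poly_Mapping.keys (v * w0). xy mu = d + e"
    using SP_keys[OF prod_SP[OF v w0(1)]] G0_xy m_eq by auto
  then have xyd: "\<forall>mu\<in>Poly_Mapping.keys v. xy mu = d"
    using pure_gen[OF VA_keys[OF v] VB_keys[OF w0(1)] w0(2)] by blast
  show ?thesis
  proof
    fix mu assume mu: "mu \<in> Poly_Mapping.keys v"
    have t: "tdeg mu = d" using VA_keys[OF v] mu by blast
    then have e1: "mu = monXY (Poly_Mapping.lookup mu 0) (Poly_Mapping.lookup mu 1)"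
      using xy_tdeg(2)[of mu] xyd mu by simp
    have "Poly_Mapping.lookup mu 0 + Poly_Mapping.lookup mu 1 = d" using xyd mu unfolding xy_def by blast
    then have "mu = monXY (d - Poly_Mapping.lookup mu 1) (Poly_Mapping.lookup mu 1)" "Poly_Mapping.lookup mu 1 \<le> d"
      using e1 by (metis add_diff_cancel_right', linarith)
    then show "mu \<in> XYd d" unfolding XYd_def by blast
  qed
qed

end

lemma init_mon_mon: "init_mon (mpoly_of_mon g :: 'k::field mpoly) = g"
  by (rule init_unique) (simp_all add: mpoly_of_mon_def)

context fact
begin

lemma pureB: assumes w: "w \<in> VB" shows "\<forall>mu\<in>Poly_Mapping.keys w. mu \<in> XYd e"
proof -
  interpret F: fact D N m Nm B A by (rule flip)
  have "F.VA = VB" unfolding F.VA_def VB_def F.d_def e_def ..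
  moreover have "F.d = e" unfolding F.d_def e_def ..
  ultimately show ?thesis using F.pureA w by simp
qed

lemma keysA_le: "v \<in> VA \<Longrightarrow> \<forall>mu\<in>Poly_Mapping.keys v. mu \<le> monXY d 0"
  using pureA XYd_le by blast

lemma keysB_le: "w \<in> VB \<Longrightarrow> \<forall>mu\<in>Poly_Mapping.keys w. mu \<le> monXY e 0"
  using pureB XYd_le by blast

lemma Xm_SP: "mpoly_of_mon (monXY m 0) \<in> SP" and Ym_SP: "mpoly_of_mon (monXY 0 m) \<in> SP"
  using mon_in_compK[OF Xm_G0] mon_in_compK[OF Ym_G0] compK_I by simp_all

lemma initA_X: "\<exists>v\<in>VA. v \<noteq> 0 \<and> init_mon v = monXY d 0"
proof (rule ccontr)
  assume H: "\<not> (\<exists>v\<in>VA. v \<noteq> 0 \<and> init_mon v = monXY d 0)"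
  have lt: "\<forall>mu\<in>Poly_Mapping.keys v. mu < monXY d 0" if v: "v \<in> VA" for v
  proof
    fix mu assume mu: "mu \<in> Poly_Mapping.keys v"
    then have v0: "v \<noteq> 0" by auto
    have "init_mon v \<le> monXY d 0" using keysA_le[OF v] init_in_keys[OF v0] by blast
    moreover have "init_mon v \<noteq> monXY d 0" using H v v0 by blast
    ultimately have "init_mon v < monXY d 0" by simp
    then show "mu < monXY d 0" using keys_le_init[OF mu] by simp
  qed
  let ?Q = "{x :: 'a mpoly. \<forall>mu\<in>Poly_Mapping.keys x. mu < monXY m 0}"
  have "SP \<subseteq> ?Q" unfolding SP_span
  proof (rule K.span_minimal[OF _ subspace_keys], safe)
    fix v w mu assume v: "v \<in> VA" and w: "w \<in> VB" and mu: "mu \<in> Poly_Mapping.keys (v * w)"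
    then obtain p q where "mu = p + q" "p \<in> Poly_Mapping.keys v" "q \<in> Poly_Mapping.keys w"
      using keys_mult by blast
    moreover have "monXY d 0 + monXY e 0 = monXY m 0" using m_eq by (simp add: monXY_add)
    ultimately show "mu < monXY m 0"
      using lt[OF v] keysB_le[OF w] add_less_le_mono by metis
  qed
  then have "mpoly_of_mon (monXY m 0) \<in> ?Q" using Xm_SP by blast
  then show False by (simp add: keys_mon)
qed

lemma initA_other: assumes BF: "ideals_BF D N" shows "\<exists>v\<in>VA. v \<noteq> 0 \<and> init_mon v \<noteq> monXY d 0"
proof (rule ccontr)
  assume "\<not> (\<exists>v\<in>VA. v \<noteq> 0 \<and> init_mon v \<noteq> monXY d 0)"
  then have H: "\<And>v. v \<in> VA \<Longrightarrow> v \<noteq> 0 \<Longrightarrow> init_mon v = monXY d 0" by blast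
  obtain f0 where f0: "f0 \<in> VA" "f0 \<noteq> 0" "init_mon f0 = monXY d 0" using initA_X by blast
  define X where "X = monXY d 0"
  have c0: "Poly_Mapping.lookup f0 X \<noteq> 0" using init_in_keys[OF f0(2)] f0(3) unfolding X_def by (simp add: in_keys_iff)
  have lin: "\<exists>c. v = smul c f0" if v: "v \<in> VA" for v
  proof -
    define c where "c = Poly_Mapping.lookup v X / Poly_Mapping.lookup f0 X"
    define v' where "v' = v - smul c f0"
    have v'V: "v' \<in> VA" unfolding v'_def using K.subspace_diff[OF VA_sub v K.subspace_scale[OF VA_sub f0(1)]] .
    have "Poly_Mapping.lookup v' X = 0" unfolding v'_def c_def using c0 by (simp add: lookup_minus)
    then have "v' = 0" using H[OF v'V] init_in_keys[of v'] unfolding X_def by (auto simp: in_keys_iff)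
    then show ?thesis unfolding v'_def by auto
  qed
  let ?Q = "{x. \<exists>w\<in>VB. x = f0 * w}"
  have Qsub: "K.subspace ?Q" unfolding K.subspace_def
  proof (intro conjI allI ballI)
    show "0 \<in> ?Q" using K.subspace_0[OF VB_sub] by force
    fix x y assume "x \<in> ?Q" "y \<in> ?Q"
    then obtain w1 w2 where "w1 \<in> VB" "w2 \<in> VB" "x = f0 * w1" "y = f0 * w2" by blast
    then show "x + y \<in> ?Q" using K.subspace_add[OF VB_sub] by (auto simp: distrib_left intro!: bexI[of _ "w1 + w2"])
  next
    fix c x assume "x \<in> ?Q"
    then obtain w1 where "w1 \<in> VB" "x = f0 * w1" by blast
    then show "smul c x \<in> ?Q" using K.subspace_scale[OF VB_sub]
      by (auto simp: smul_conv mult.left_commute intro!: bexI[of _ "smul c w1"])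
  qed
  have "SP \<subseteq> ?Q" unfolding SP_span
  proof (rule K.span_minimal[OF _ Qsub], safe)
    fix v w assume v: "v \<in> VA" and w: "w \<in> VB"
    obtain c where c: "v = smul c f0" using lin[OF v] by blast
    have "v * w = f0 * smul c w" unfolding c by (simp add: smul_conv mult.left_commute)
    then show "\<exists>w'\<in>VB. v * w = f0 * w'" using K.subspace_scale[OF VB_sub w] by blast
  qed
  then obtain w where w: "w \<in> VB" "mpoly_of_mon (monXY 0 m) = f0 * w" using Ym_SP by blast
  have w0: "w \<noteq> 0" using w(2) mon_nz by auto
  have "monXY 0 m = init_mon f0 + init_mon w" using init_mult(1)[OF f0(2) w0] w(2) init_mon_mon by metis
  then have "Poly_Mapping.lookup (monXY 0 m) 0 = d + Poly_Mapping.lookup (init_mon w) 0"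
    using f0(3) by (simp add: lookup_add lookup_monXY)
  then show False using d_pos[OF BF] by (simp add: lookup_monXY)
qed

lemma basisA: assumes BF: "ideals_BF D N"
  shows "\<exists>fs. is_basisK VA fs \<and> length fs = dimK VA \<and> 2 \<le> length fs \<and> init_mon (fs ! 0) = monXY d 0
    \<and> (\<forall>j k. j < k \<and> k < length fs \<longrightarrow> init_mon (fs ! k) < init_mon (fs ! j))
    \<and> (\<forall>j<length fs. fs ! j \<in> VA \<and> fs ! j \<noteq> 0 \<and> init_mon (fs ! j) \<in> XYd d)"
proof -
  have kv: "\<forall>v\<in>VA. Poly_Mapping.keys v \<subseteq> XYd d" using pureA by blast
  obtain fs where fs: "is_basisK VA fs" "sorted_wrt (\<lambda>x y. init_mon y < init_mon x) fs"
    "init_mon ` set fs = {init_mon v |v. v \<in> VA \<and> v \<noteq> 0}" "0 \<notin> set fs"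
    using echelon[OF VA_sub finite_XYd kv] by blast
  have len: "length fs = dimK VA" using dimK_basis[OF fs(1)] by simp
  have sV: "set fs \<subseteq> VA" using fs(1) unfolding is_basisK_def by blast
  have less: "\<forall>j k. j < k \<and> k < length fs \<longrightarrow> init_mon (fs ! k) < init_mon (fs ! j)"
    using fs(2) by (auto simp: sorted_wrt_iff_nth_less)
  have mem: "\<forall>j<length fs. fs ! j \<in> VA \<and> fs ! j \<noteq> 0 \<and> init_mon (fs ! j) \<in> XYd d"
  proof (intro allI impI conjI)
    fix j assume j: "j < length fs"
    show "fs ! j \<in> VA" using sV j nth_mem by blast
    show nz: "fs ! j \<noteq> 0" using fs(4) j nth_mem by metis
    show "init_mon (fs ! j) \<in> XYd d" using pureA[OF \<open>fs ! j \<in> VA\<close>] init_in_keys[OF nz] by blast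
  qed
  obtain v1 where v1: "v1 \<in> VA" "v1 \<noteq> 0" "init_mon v1 = monXY d 0" using initA_X by blast
  obtain v2 where v2: "v2 \<in> VA" "v2 \<noteq> 0" "init_mon v2 \<noteq> monXY d 0" using initA_other[OF BF] by blast
  have "monXY d 0 \<in> {init_mon v |v. v \<in> VA \<and> v \<noteq> 0}" using v1 by force
  moreover have "init_mon v2 \<in> {init_mon v |v. v \<in> VA \<and> v \<noteq> 0}" using v2 by blast
  ultimately have sub2: "{monXY d 0, init_mon v2} \<subseteq> init_mon ` set fs" unfolding fs(3) by blast
  have "2 = card {monXY d 0, init_mon v2}" using v2(3) by simp
  also have "\<dots> \<le> card (init_mon ` set fs)" by (rule card_mono[OF _ sub2]) simp
  also have "\<dots> \<le> card (set fs)" by (rule card_image_le) simp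
  also have "\<dots> \<le> length fs" by (rule card_length)
  finally have two: "2 \<le> length fs" .
  obtain k where k: "k < length fs" "init_mon (fs ! k) = monXY d 0"
    using sub2 by (auto simp: in_set_conv_nth)
  have "init_mon (fs ! 0) = monXY d 0"
  proof (cases "k = 0")
    case True then show ?thesis using k by simp
  next
    case False
    then have "monXY d 0 < init_mon (fs ! 0)" using less k by (metis gr0I)
    moreover have "init_mon (fs ! 0) \<le> monXY d 0" using mem two XYd_le by (metis gr0I not_numeral_le_zero)
    ultimately show ?thesis by simp
  qed
  then show ?thesis using fs(1) len two less mem by blast
qed

end

theorem lemma3p1:
  fixes D :: "'k::field set" and N m :: nat
    and \<N> :: "(nat \<Rightarrow>\<^sub>0 nat) set" and A B :: "'k mpoly set"
  assumes D: "has_quotient_field D"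
    and N: "N \<ge> 2"
    and BF: "ideals_BF D N"
    and m: "m \<ge> 1"
    and \<N>: "\<N> \<subseteq> {monXY (m - i) i |i. i \<le> m}"
    and A: "A \<in> nz_ideals D N" "A \<noteq> PolyR D N"
    and B: "B \<in> nz_ideals D N" "B \<noteq> PolyR D N"
    and I: "ideal_gen D N (mpoly_of_mon ` ({monXY m 0, monXY 0 m} \<union> \<N>)) = ideal_mult D N A B"
  defines "d \<equiv> mdeg_ideal A" and "e \<equiv> mdeg_ideal B"
    and "r \<equiv> dimK (compK A (mdeg_ideal A))" and "s \<equiv> dimK (compK B (mdeg_ideal B))"
  shows "m = d + e
    \<and> compK (ideal_gen D N (mpoly_of_mon ` ({monXY m 0, monXY 0 m} \<union> \<N>))) m
        = spprod (compK A d) (compK B e)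
    \<and> d \<ge> 1 \<and> e \<ge> 1
    \<and> r \<ge> 2 \<and> s \<ge> 2
    \<and> (\<exists>fs gs a b.
          is_basisK (compK A d) fs \<and> length fs = r \<and>
          is_basisK (compK B e) gs \<and> length gs = s \<and>
          init_mon (fs ! 0) = monXY d 0 \<and>
          (\<forall>j. j + 1 < r \<longrightarrow> lex_less (init_mon (fs ! (j + 1))) (init_mon (fs ! j))) \<and>
          init_mon (gs ! 0) = monXY e 0 \<and>
          (\<forall>k. k + 1 < s \<longrightarrow> lex_less (init_mon (gs ! (k + 1))) (init_mon (gs ! k))) \<and>
          a 0 = 0 \<and> b 0 = 0 \<and>
          (\<forall>j. 1 \<le> j \<and> j < r \<longrightarrow> 1 \<le> a j \<and> a j \<le> d \<and> init_mon (fs ! j) = monXY (d - a j) (a j)) \<and>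
          (\<forall>k. 1 \<le> k \<and> k < s \<longrightarrow> 1 \<le> b k \<and> b k \<le> e \<and> init_mon (gs ! k) = monXY (e - b k) (b k)) \<and>
          (\<forall>j<r. \<forall>k<s. monXY (m - (a j + b k)) (a j + b k) \<in> {monXY m 0, monXY 0 m} \<union> \<N>))"
proof -
  have Dsub: "is_subring D" using D unfolding has_quotient_field_def by blast
  interpret F: fact D N m \<N> A B
  proof (rule fact.intro[OF monid.intro[OF Dsub N m \<N>]], rule fact_axioms.intro)
    show "monid.I D N m \<N> = ideal_mult D N A B"
      unfolding monid.I_def[OF monid.intro[OF Dsub N m \<N>]] monid.G0_def[OF monid.intro[OF Dsub N m \<N>]] using I .
  qed (use A B in auto)
  interpret F2: fact D N m \<N> B A by (rule F.flip)
  have Ieq: "ideal_gen D N (mpoly_of_mon ` ({monXY m 0, monXY 0 m} \<union> \<N>)) = F.I"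
    unfolding F.I_def F.G0_def ..
  have dd: "d = F.d" unfolding d_def F.d_def ..
  have ee: "e = F.e" unfolding e_def F.e_def ..
  have ee2: "e = F2.d" unfolding e_def F2.d_def ..
  have VA: "compK A d = F.VA" unfolding F.VA_def dd ..
  have VB: "compK B e = F.VB" unfolding F.VB_def ee ..
  have VB2: "compK B e = F2.VA" unfolding F2.VA_def ee2 ..
  have rr: "r = dimK F.VA" unfolding r_def F.VA_def F.d_def ..
  have ss: "s = dimK F2.VA" unfolding s_def F2.VA_def F2.d_def ..
  have meq: "m = d + e" using F.m_eq dd ee by simp
  have c2: "compK (ideal_gen D N (mpoly_of_mon ` ({monXY m 0, monXY 0 m} \<union> \<N>))) m = spprod (compK A d) (compK B e)"
    unfolding Ieq VA VB F.compK_I F.SP_def ..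
  have dpos: "1 \<le> d" using F.d_pos[OF BF] dd by simp
  have epos: "1 \<le> e" using F2.d_pos[OF BF] ee2 by simp
  obtain fs where fs: "is_basisK F.VA fs" "length fs = dimK F.VA" "2 \<le> length fs" "init_mon (fs ! 0) = monXY F.d 0"
    "\<forall>j k. j < k \<and> k < length fs \<longrightarrow> init_mon (fs ! k) < init_mon (fs ! j)"
    "\<forall>j<length fs. fs ! j \<in> F.VA \<and> fs ! j \<noteq> 0 \<and> init_mon (fs ! j) \<in> XYd F.d"
    using F.basisA[OF BF] by blast
  obtain gs where gs: "is_basisK F2.VA gs" "length gs = dimK F2.VA" "2 \<le> length gs" "init_mon (gs ! 0) = monXY F2.d 0"
    "\<forall>j k. j < k \<and> k < length gs \<longrightarrow> init_mon (gs ! k) < init_mon (gs ! j)"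
    "\<forall>j<length gs. gs ! j \<in> F2.VA \<and> gs ! j \<noteq> 0 \<and> init_mon (gs ! j) \<in> XYd F2.d"
    using F2.basisA[OF BF] by blast
  define a where "a = (\<lambda>j. Poly_Mapping.lookup (init_mon (fs ! j)) 1)"
  define b where "b = (\<lambda>k. Poly_Mapping.lookup (init_mon (gs ! k)) 1)"
  have lr: "length fs = r" using fs(2) rr by simp
  have ls: "length gs = s" using gs(2) ss by simp
  have fa: "init_mon (fs ! j) = monXY (d - a j) (a j) \<and> a j \<le> d" if "j < r" for j
    using XYd_char[of "init_mon (fs ! j)" d] fs(6) that lr dd unfolding a_def by auto
  have gb: "init_mon (gs ! k) = monXY (e - b k) (b k) \<and> b k \<le> e" if "k < s" for k
    using XYd_char[of "init_mon (gs ! k)" e] gs(6) that ls ee2 unfolding b_def by auto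
  have a0: "a 0 = 0" unfolding a_def using fs(4) by (simp add: lookup_monXY)
  have b0: "b 0 = 0" unfolding b_def using gs(4) by (simp add: lookup_monXY)
  have ja: "1 \<le> a j \<and> a j \<le> d \<and> init_mon (fs ! j) = monXY (d - a j) (a j)" if "1 \<le> j \<and> j < r" for j
  proof -
    have "init_mon (fs ! j) < init_mon (fs ! 0)" using fs(5) that lr by auto
    moreover have "init_mon (fs ! j) = monXY (d - a j) (a j)" using fa[of j] that by simp
    ultimately have "a j \<noteq> 0" using fs(4) dd by (metis diff_zero less_irrefl)
    then show ?thesis using fa[of j] that by simp
  qed
  have kb: "1 \<le> b k \<and> b k \<le> e \<and> init_mon (gs ! k) = monXY (e - b k) (b k)" if "1 \<le> k \<and> k < s" for k
  proof -
    have "init_mon (gs ! k) < init_mon (gs ! 0)" using gs(5) that ls by auto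
    moreover have "init_mon (gs ! k) = monXY (e - b k) (b k)" using gb[of k] that by simp
    ultimately have "b k \<noteq> 0" using gs(4) ee2 by (metis diff_zero less_irrefl)
    then show ?thesis using gb[of k] that by simp
  qed
  have last: "monXY (m - (a j + b k)) (a j + b k) \<in> {monXY m 0, monXY 0 m} \<union> \<N>" if "j < r" "k < s" for j k
  proof -
    have f: "fs ! j \<in> F.VA" "fs ! j \<noteq> 0" using fs(6) that lr by auto
    have g: "gs ! k \<in> F.VB" "gs ! k \<noteq> 0" using gs(6) that ls VB VB2 by auto
    have "init_mon (fs ! j * gs ! k) \<in> Poly_Mapping.keys (fs ! j * gs ! k)"
      using init_in_keys init_mult(2)[OF f(2) g(2)] by blast
    then have "init_mon (fs ! j) + init_mon (gs ! k) \<in> F.G0"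
      using F.SP_keys[OF F.prod_SP[OF f(1) g(1)]] init_mult(1)[OF f(2) g(2)] by simp
    moreover have "init_mon (fs ! j) + init_mon (gs ! k) = monXY (m - (a j + b k)) (a j + b k)"
      using fa[OF that(1)] gb[OF that(2)] meq by (simp add: monXY_add)
    ultimately show ?thesis unfolding F.G0_def by simp
  qed
  have fsA: "is_basisK (compK A d) fs" using fs(1) VA by simp
  have gsB: "is_basisK (compK B e) gs" using gs(1) VB2 by simp
  have i0: "init_mon (fs ! 0) = monXY d 0" using fs(4) dd by simp
  have k0: "init_mon (gs ! 0) = monXY e 0" using gs(4) ee2 by simp
  have decf: "\<forall>j. j + 1 < r \<longrightarrow> lex_less (init_mon (fs ! (j + 1))) (init_mon (fs ! j))"
    using fs(5) lr by (simp add: lex_less_iff)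
  have decg: "\<forall>k. k + 1 < s \<longrightarrow> lex_less (init_mon (gs ! (k + 1))) (init_mon (gs ! k))"
    using gs(5) ls by (simp add: lex_less_iff)
  have ex: "\<exists>fs gs a b.
          is_basisK (compK A d) fs \<and> length fs = r \<and>
          is_basisK (compK B e) gs \<and> length gs = s \<and>
          init_mon (fs ! 0) = monXY d 0 \<and>
          (\<forall>j. j + 1 < r \<longrightarrow> lex_less (init_mon (fs ! (j + 1))) (init_mon (fs ! j))) \<and>
          init_mon (gs ! 0) = monXY e 0 \<and>
          (\<forall>k. k + 1 < s \<longrightarrow> lex_less (init_mon (gs ! (k + 1))) (init_mon (gs ! k))) \<and>
          a 0 = 0 \<and> b 0 = 0 \<and>
          (\<forall>j. 1 \<le> j \<and> j < r \<longrightarrow> 1 \<le> a j \<and> a j \<le> d \<and> init_mon (fs ! j) = monXY (d - a j) (a j)) \<and>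
          (\<forall>k. 1 \<le> k \<and> k < s \<longrightarrow> 1 \<le> b k \<and> b k \<le> e \<and> init_mon (gs ! k) = monXY (e - b k) (b k)) \<and>
          (\<forall>j<r. \<forall>k<s. monXY (m - (a j + b k)) (a j + b k) \<in> {monXY m 0, monXY 0 m} \<union> \<N>)"
    by (rule exI[of _ fs], rule exI[of _ gs], rule exI[of _ a], rule exI[of _ b])
       (use fsA gsB lr ls i0 k0 decf decg a0 b0 ja kb last in blast)
  have r2: "2 \<le> r" using fs(3) lr by simp
  have s2: "2 \<le> s" using gs(3) ls by simp
  show ?thesis using meq c2 dpos epos r2 s2 ex by blast
qed

end
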